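(* Let $A$ be a bounded linear operator on $L^2(\mathbb R,dx)$ which is diagonal with respect to an orthonormal basis $\{e_n\}_{n\in\mathbb N}$ of $L^2(\mathbb R,dx)$, with all eigenvalues in the open interval $(0,2)$, and let $\Phi_A$ be the corresponding Gauss kernel. Then: (i) If $0<\det(2A-A^2)<\infty$, then $\Phi_A\in L^2(\mu)$. (ii) Let $\alpha>0$. If $\sup_{0<\lambda<1}\frac{\partial^\alpha}{\partial\lambda^\alpha}\det\big(Id-(\lambda^2(Id-A))^2\big)^{-\frac12}<\infty$, then $\Phi_A\in\mathcal D^{\alpha,2}$.
   Context: $\mu$ is the white noise measure on the tempered distributions $\mathcal S'$ (Gaussian with $\int e^{i\langle\xi,x\rangle}d\mu=e^{-|\xi|^2/2}$, $\xi\in\mathcal S$). Hida distributions are determined by their $S$-transform $S\Phi(\xi)=\sum_n\langle\Phi^{(n)},\xi^{\otimes n}\rangle$, $\xi\in\mathcal S_{\mathbb C}$, where $\Phi=\sum_n\langle\Phi^{(n)},:\cdot^{\otimes n}:\rangle$ is the chaos expansion. For $A$ a bounded operator on $L^2(\mathbb R,dx)$ (extended complex-linearly), the Gauss kernel $\Phi_A$ is the Hida distribution with $S\Phi_A(\xi)=\exp\big(-\tfrac12\langle\xi,(Id-A)\xi\rangle\big)$, $\xi\in\mathcal S_{\mathbb C}$. For $A$ diagonal in $\{e_n\}$ with eigenvalues $a_n$, determinants are the infinite products of eigenvalues: $\det(2A-A^2)=\prod_n(2a_n-a_n^2)$ and $\det(Id-(\lambda^2(Id-A))^2)=\prod_n(1-\lambda^4(1-a_n)^2)$.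 For $\alpha\in\mathbb R$, $\mathcal D^{\alpha,2}$ consists of those $\Phi$ with square-integrable symmetric kernels $\Phi^{(n)}$ and $\sum_n(1+n^\alpha)\,n!\,|\Phi^{(n)}|^2<\infty$. For $\alpha>0$: if $\alpha\in\mathbb N$, $\frac{\partial^\alpha}{\partial\lambda^\alpha}$ is the ordinary derivative of order $\alpha$; otherwise, with $n\in\mathbb N$ such that $n<\alpha<n+1$, $\frac{\partial^\alpha}{\partial\lambda^\alpha}:=D^{\alpha-n}_{0+}\frac{\partial^n}{\partial\lambda^n}$, where $D^{\beta}_{0+}f(x)=\frac{1}{\Gamma(1-\beta)}\frac{d}{dx}\int_0^xf(t)(x-t)^{-\beta}dt$ is the left-sided Riemann–Liouville derivative of order $\beta\in(0,1)$. *)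

theory Defs
  imports "HOL-Analysis.Analysis" "HOL-Library.Multiset"
begin

text \<open>The operator A is diagonal in the orthonormal basis e_k of L^2(R),
  so it is described by its eigenvalue sequence a. A chaos kernel Phi^(n) is described by
  its coefficients F n ks with respect to the orthonormal system
  e_(ks!0) (x) ... (x) e_(ks!(n-1)), ks a list of length n.\<close>

text \<open>Pairing of the n-th kernel with xi^(x)n, for xi a finite combination of the e_k.\<close>
definition S_pair :: "(nat \<Rightarrow> nat list \<Rightarrow> complex) \<Rightarrow> nat \<Rightarrow> (nat \<Rightarrow> complex) \<Rightarrow> complex" where
  "S_pair F n \<xi> =
     (\<Sum>ks\<in>{ks. length ks = n \<and> set ks \<subseteq> {k. \<xi> k \<noteq> 0}}. F n ks * prod_list (map \<xi> ks))"

text \<open>F is the (symmetric) chaos expansion of the Gauss kernel Phi_A: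
  S Phi_A (xi) = exp(-1/2 <xi,(Id-A)xi>), bilinear pairing.\<close>
definition is_gauss_kernel :: "(nat \<Rightarrow> real) \<Rightarrow> (nat \<Rightarrow> nat list \<Rightarrow> complex) \<Rightarrow> bool" where
  "is_gauss_kernel a F \<longleftrightarrow>
     (\<forall>n ks ks'. mset ks = mset ks' \<longrightarrow> F n ks = F n ks') \<and>
     (\<forall>\<xi>. finite {k. \<xi> k \<noteq> 0} \<longrightarrow>
        (\<lambda>n. S_pair F n \<xi>) sums
          exp (- (1/2) * (\<Sum>k\<in>{k. \<xi> k \<noteq> 0}. complex_of_real (1 - a k) * (\<xi> k)^2)))"

definition kernel_norm2 :: "(nat \<Rightarrow> nat list \<Rightarrow> complex) \<Rightarrow> nat \<Rightarrow> real" where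
  "kernel_norm2 F n = (\<Sum>\<^sub>\<infinity>ks\<in>{ks. length ks = n}. (cmod (F n ks))^2)"

definition sq_integrable_kernels :: "(nat \<Rightarrow> nat list \<Rightarrow> complex) \<Rightarrow> bool" where
  "sq_integrable_kernels F \<longleftrightarrow>
     (\<forall>n. (\<lambda>ks. (cmod (F n ks))^2) summable_on {ks. length ks = n})"

text \<open>Membership in L^2(mu) (Wiener-Ito chaos isometry) and in D^{alpha,2}.\<close>
definition in_L2 :: "(nat \<Rightarrow> nat list \<Rightarrow> complex) \<Rightarrow> bool" where
  "in_L2 F \<longleftrightarrow> sq_integrable_kernels F \<and> summable (\<lambda>n. fact n * kernel_norm2 F n)"

definition in_D :: "real \<Rightarrow> (nat \<Rightarrow> nat list \<Rightarrow> complex) \<Rightarrow> bool" where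
  "in_D \<alpha> F \<longleftrightarrow> sq_integrable_kernels F \<and>
     summable (\<lambda>n. (1 + real n powr \<alpha>) * fact n * kernel_norm2 F n)"

definition det_2A_A2 :: "(nat \<Rightarrow> real) \<Rightarrow> real" where
  "det_2A_A2 a = lim (\<lambda>N. \<Prod>k<N. 2 * a k - (a k)^2)"

definition det_lam :: "(nat \<Rightarrow> real) \<Rightarrow> real \<Rightarrow> real" where
  "det_lam a l = lim (\<lambda>N. \<Prod>k<N. 1 - (l^2 * (1 - a k))^2)"

definition gfun :: "(nat \<Rightarrow> real) \<Rightarrow> real \<Rightarrow> real" where
  "gfun a l = det_lam a l powr (-(1/2))"

fun iter_deriv_on :: "nat \<Rightarrow> (real \<Rightarrow> real) \<Rightarrow> real set \<Rightarrow> (real \<Rightarrow> real) \<Rightarrow> bool" where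
  "iter_deriv_on 0 g S h \<longleftrightarrow> (\<forall>x\<in>S. h x = g x)"
| "iter_deriv_on (Suc n) g S h \<longleftrightarrow>
     (\<exists>g'. (\<forall>x\<in>S. (g has_real_derivative g' x) (at x)) \<and> iter_deriv_on n g' S h)"

definition has_RL_deriv :: "real \<Rightarrow> (real \<Rightarrow> real) \<Rightarrow> real \<Rightarrow> real \<Rightarrow> bool" where
  "has_RL_deriv \<beta> f x v \<longleftrightarrow>
     (\<exists>I. (\<forall>y\<in>{0<..<1}. (\<lambda>t. f t * (y - t) powr (-\<beta>)) absolutely_integrable_on {0..y} \<and>
                         I y = integral {0..y} (\<lambda>t. f t * (y - t) powr (-\<beta>))) \<and>
          (I has_real_derivative (Gamma (1 - \<beta>) * v)) (at x))"

definition has_alpha_deriv :: "real \<Rightarrow> (real \<Rightarrow> real) \<Rightarrow> real \<Rightarrow> real \<Rightarrow> bool" where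
  "has_alpha_deriv \<alpha> g x v \<longleftrightarrow>
     (if \<alpha> \<in> \<nat> then (\<exists>h. iter_deriv_on (nat \<lfloor>\<alpha>\<rfloor>) g {0<..<1} h \<and> h x = v)
      else (\<exists>h. iter_deriv_on (nat \<lfloor>\<alpha>\<rfloor>) g {0<..<1} h \<and>
                 has_RL_deriv (\<alpha> - of_int \<lfloor>\<alpha>\<rfloor>) h x v))"

end

theory Submission
  imports Defs
begin

definition LL :: "nat set \<Rightarrow> nat \<Rightarrow> nat list set" where
  "LL K n = {xs. set xs \<subseteq> K \<and> length xs = n}"

lemma finite_LL: "finite K \<Longrightarrow> finite (LL K n)"
  unfolding LL_def using finite_lists_length_eq by blast

lemma LL_0[simp]: "LL K 0 = {[]}" unfolding LL_def by auto

lemma sum_LL_Suc: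
  assumes "finite K"
  shows "(\<Sum>ks\<in>LL K (Suc m). g ks) = (\<Sum>x\<in>K. \<Sum>ks\<in>LL K m. g (x#ks))"
proof -
  have e: "LL K (Suc m) = (\<lambda>(xs, n). n#xs) ` (LL K m \<times> K)"
    unfolding LL_def by (rule lists_length_Suc_eq)
  have inj: "inj_on (\<lambda>(xs, n). n#xs) (LL K m \<times> K)"
    by (auto simp: inj_on_def)
  have "(\<Sum>ks\<in>LL K (Suc m). g ks) = (\<Sum>p\<in>LL K m \<times> K. g (snd p # fst p))"
    unfolding e by (subst sum.reindex[OF inj]) (auto intro!: sum.cong)
  also have "\<dots> = (\<Sum>ks\<in>LL K m. \<Sum>x\<in>K. g (x#ks))"
    by (simp add: sum.cartesian_product split_beta)
  also have "\<dots> = (\<Sum>x\<in>K. \<Sum>ks\<in>LL K m. g (x#ks))"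
    by (rule sum.swap)
  finally show ?thesis .
qed

lemma pascal_sum:
  fixes A :: "nat \<Rightarrow> 'a::comm_ring_1"
  shows "(\<Sum>r\<le>n. of_nat (n choose r) * (A (Suc r) + A r)) =
         (\<Sum>r\<le>Suc n. of_nat (Suc n choose r) * A r)"
proof -
  have "(\<Sum>r\<le>n. of_nat (n choose r) * A r) = (\<Sum>r\<le>Suc n. of_nat (n choose r) * A r)"
    by (simp add: binomial_eq_0)
  also have "\<dots> = A 0 + (\<Sum>r\<le>n. of_nat (n choose Suc r) * A (Suc r))"
    by (subst sum.atMost_Suc_shift) simp
  finally have 1: "(\<Sum>r\<le>n. of_nat (n choose r) * A r) = A 0 + (\<Sum>r\<le>n. of_nat (n choose Suc r) * A (Suc r))" .
  have "(\<Sum>r\<le>Suc n. of_nat (Suc n choose r) * A r) = A 0 + (\<Sum>r\<le>n. of_nat (Suc n choose Suc r) * A (Suc r))"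
    by (subst sum.atMost_Suc_shift) simp
  also have "\<dots> = A 0 + ((\<Sum>r\<le>n. of_nat (n choose r) * A (Suc r)) + (\<Sum>r\<le>n. of_nat (n choose Suc r) * A (Suc r)))"
    by (simp only: binomial_Suc_Suc of_nat_add distrib_right sum.distrib)
  finally have 2: "(\<Sum>r\<le>Suc n. of_nat (Suc n choose r) * A r) = A 0 + ((\<Sum>r\<le>n. of_nat (n choose r) * A (Suc r)) + (\<Sum>r\<le>n. of_nat (n choose Suc r) * A (Suc r)))" .
  have "(\<Sum>r\<le>n. of_nat (n choose r) * (A (Suc r) + A r)) = (\<Sum>r\<le>n. of_nat (n choose r) * A (Suc r)) + (\<Sum>r\<le>n. of_nat (n choose r) * A r)"
    by (simp only: distrib_left sum.distrib)
  then show ?thesis unfolding 1 2 by (simp only: add_ac)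
qed

lemma split_sum:
  fixes w :: "nat list \<Rightarrow> 'a::comm_ring_1"
  assumes sym: "\<And>xs ys. mset xs = mset ys \<Longrightarrow> w xs = w ys"
    and j: "j \<notin> K" and fin: "finite K"
  shows "(\<Sum>ks\<in>LL (insert j K) n. w ks) =
         (\<Sum>r\<le>n. of_nat (n choose r) * (\<Sum>ks\<in>LL K (n-r). w (replicate r j @ ks)))"
  using sym
proof (induction n arbitrary: w)
  case 0
  show ?case by simp
next
  case (Suc n)
  define A where "A r = (\<Sum>ks\<in>LL K (Suc n - r). w (replicate r j @ ks))" for r
  have fin': "finite (insert j K)" using fin by simp
  have "(\<Sum>ks\<in>LL (insert j K) (Suc n). w ks) =
        (\<Sum>x\<in>insert j K. \<Sum>ks\<in>LL (insert j K) n. w (x#ks))"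
    by (rule sum_LL_Suc[OF fin'])
  also have "\<dots> = (\<Sum>ks\<in>LL (insert j K) n. w (j#ks)) + (\<Sum>x\<in>K. \<Sum>ks\<in>LL (insert j K) n. w (x#ks))"
    using j fin by simp
  also have "(\<Sum>ks\<in>LL (insert j K) n. w (j#ks)) =
      (\<Sum>r\<le>n. of_nat (n choose r) * (\<Sum>ks\<in>LL K (n-r). w (j # replicate r j @ ks)))"
    by (rule Suc.IH) (rule Suc.prems, simp)
  also have "\<dots> = (\<Sum>r\<le>n. of_nat (n choose r) * A (Suc r))"
    unfolding A_def by (intro sum.cong refl) (simp add: replicate_app_Cons_same[symmetric])
  also have "(\<Sum>x\<in>K. \<Sum>ks\<in>LL (insert j K) n. w (x#ks)) =
     (\<Sum>x\<in>K. \<Sum>r\<le>n. of_nat (n choose r) * (\<Sum>ks\<in>LL K (n-r). w (x # replicate r j @ ks)))"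
    by (intro sum.cong refl Suc.IH) (rule Suc.prems, simp)
  also have "\<dots> = (\<Sum>r\<le>n. of_nat (n choose r) * (\<Sum>x\<in>K. \<Sum>ks\<in>LL K (n-r). w (x # replicate r j @ ks)))"
    by (subst sum.swap) (simp add: sum_distrib_left)
  also have "\<dots> = (\<Sum>r\<le>n. of_nat (n choose r) * (\<Sum>x\<in>K. \<Sum>ks\<in>LL K (n-r). w (replicate r j @ x # ks)))"
    by (intro sum.cong refl arg_cong2[where f="(*)"]) (rule Suc.prems, simp)
  also have "\<dots> = (\<Sum>r\<le>n. of_nat (n choose r) * A r)"
  proof (intro sum.cong refl arg_cong2[where f="(*)"])
    fix r assume "r \<in> {..n}"
    then have "Suc n - r = Suc (n - r)" by auto
    then show "(\<Sum>x\<in>K. \<Sum>ks\<in>LL K (n-r). w (replicate r j @ x # ks)) = A r"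
      unfolding A_def using sum_LL_Suc[OF fin, where m="n-r" and g="\<lambda>ks. w (replicate r j @ ks)"] by simp
  qed
  finally have "(\<Sum>ks\<in>LL (insert j K) (Suc n). w ks) = (\<Sum>r\<le>n. of_nat (n choose r) * (A (Suc r) + A r))"
    by (simp only: distrib_left sum.distrib)
  also have "\<dots> = (\<Sum>r\<le>Suc n. of_nat (Suc n choose r) * A r)" by (rule pascal_sum)
  finally show ?case unfolding A_def .
qed

lemma prod_list_map_sym:
  "mset xs = mset ys \<Longrightarrow> prod_list (map f xs) = (prod_list (map f ys) :: 'a::comm_monoid_mult)"
  by (metis mset_map prod_mset_prod_list)

lemma filter_split_mset:
  "mset xs = mset (filter P xs) + mset (filter (\<lambda>x. \<not> P x) xs)"
  by (induct xs) auto

lemma uniq: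
  fixes D :: "nat list \<Rightarrow> complex"
  assumes "\<And>xs ys. mset xs = mset ys \<Longrightarrow> D xs = D ys"
    and "\<And>\<xi>. (\<forall>k\<ge>N. \<xi> k = 0) \<Longrightarrow> (\<Sum>ks\<in>LL {..<N} n. D ks * prod_list (map \<xi> ks)) = 0"
    and "ks \<in> LL {..<N} n"
  shows "D ks = 0"
  using assms
proof (induction N arbitrary: n D ks)
  case 0
  have ks: "ks = []" "n = 0" using "0.prems"(3) unfolding LL_def by auto
  show ?case using "0.prems"(2)[of "\<lambda>_. 0"] ks by simp
next
  case (Suc N)
  define K where "K = {..<N}"
  have KS: "{..<Suc N} = insert N K" unfolding K_def by auto
  have NK: "N \<notin> K" and finK: "finite K" unfolding K_def by auto
  define ks0 where "ks0 = filter (\<lambda>y. y = N) ks"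
  define ks' where "ks' = filter (\<lambda>y. y \<noteq> N) ks"
  define r where "r = length ks0"
  have ks0r: "ks0 = replicate r N" unfolding r_def ks0_def
    by (metis (mono_tags, lifting) mem_Collect_eq replicate_length_same set_filter)
  have lenks: "length ks = n" using Suc.prems(3) unfolding LL_def by auto
  have lsum: "r + length ks' = n"
    unfolding r_def ks0_def ks'_def using sum_length_filter_compl[of "\<lambda>y. y = N" ks] lenks by simp
  have rn: "r \<le> n" using lsum by simp
  have ks'L: "ks' \<in> LL K (n - r)"
    using Suc.prems(3) lsum unfolding ks'_def LL_def K_def by auto
  have msetks: "mset ks = mset (replicate r N @ ks')"
    using filter_split_mset[of ks "\<lambda>y. y = N"] ks0r unfolding ks0_def ks'_def by simp
  define D' where "D' ys = D (replicate r N @ ys)" for ys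
  have "D' ks' = 0"
  proof (rule Suc.IH[of D' "n - r"])
    show "\<And>xs ys. mset xs = mset ys \<Longrightarrow> D' xs = D' ys"
      unfolding D'_def by (rule Suc.prems(1)) simp
    show "ks' \<in> LL {..<N} (n - r)" using ks'L unfolding K_def .
    fix \<xi> :: "nat \<Rightarrow> complex" assume \<xi>: "\<forall>k\<ge>N. \<xi> k = 0"
    define c where "c r' = of_nat (n choose r') * (\<Sum>ys\<in>LL K (n - r'). D (replicate r' N @ ys) * prod_list (map \<xi> ys))" for r'
    have "\<forall>x. (\<Sum>i\<le>n. c i * x^i) = 0"
    proof
      fix x :: complex
      define \<xi>x where "\<xi>x = \<xi>(N := x)"
      have "(\<forall>k\<ge>Suc N. \<xi>x k = 0)" using \<xi> unfolding \<xi>x_def by auto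
      then have "0 = (\<Sum>ks\<in>LL (insert N K) n. D ks * prod_list (map \<xi>x ks))"
        using Suc.prems(2)[of \<xi>x] KS by simp
      also have "\<dots> = (\<Sum>i\<le>n. of_nat (n choose i) * (\<Sum>ys\<in>LL K (n-i). D (replicate i N @ ys) * prod_list (map \<xi>x (replicate i N @ ys))))"
        by (rule split_sum[OF _ NK finK]) (metis Suc.prems(1) prod_list_map_sym)
      also have "\<dots> = (\<Sum>i\<le>n. c i * x^i)"
      proof (intro sum.cong refl)
        fix i assume "i \<in> {..n}"
        have "prod_list (map \<xi>x (replicate i N @ ys)) = x^i * prod_list (map \<xi> ys)" if "ys \<in> LL K (n-i)" for ys
        proof -
          have "map \<xi>x ys = map \<xi> ys" using that NK unfolding LL_def \<xi>x_def by (auto intro!: map_cong)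
          moreover have "\<xi>x N = x" unfolding \<xi>x_def by simp
          ultimately show ?thesis
            by (simp only: map_append map_replicate prod_list.append prod_list_replicate)
        qed
        then show "of_nat (n choose i) * (\<Sum>ys\<in>LL K (n-i). D (replicate i N @ ys) * prod_list (map \<xi>x (replicate i N @ ys))) = c i * x^i"
          unfolding c_def by (simp add: sum_distrib_left sum_distrib_right mult_ac cong: sum.cong)
      qed
      finally show "(\<Sum>i\<le>n. c i * x^i) = 0" by simp
    qed
    then have "c r = 0" using polyfun_eq_0[of c n] rn by blast
    then show "(\<Sum>ks\<in>LL {..<N} (n - r). D' ks * prod_list (map \<xi> ks)) = 0"
      unfolding c_def D'_def K_def using rn by simp
  qed
  then show ?case unfolding D'_def using Suc.prems(1)[OF msetks] by simp
qed

lemma powser_zero_coeff0: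
  fixes c :: "nat \<Rightarrow> complex"
  assumes "\<And>t. t \<noteq> 0 \<Longrightarrow> (\<lambda>n. c n * t^n) sums 0"
  shows "c 0 = 0"
proof -
  define f where "f t = (\<Sum>n. c n * t^n)" for t
  have sm1: "summable (\<lambda>n. c n * 1^n)" using assms[of 1] sums_summable by force
  have "isCont f 0" unfolding f_def by (rule isCont_powser[OF sm1]) simp
  then have lim: "(f \<longlongrightarrow> f 0) (at 0)" by (simp add: isCont_def)
  have ev: "eventually (\<lambda>t. f t = 0) (at (0::complex))"
    unfolding eventually_at_filter
  proof (rule always_eventually, intro allI impI)
    fix t :: complex assume t: "t \<noteq> 0"
    show "f t = 0" unfolding f_def using sums_unique[OF assms[OF t]] by simp
  qed
  have "(f \<longlongrightarrow> 0) (at 0)" using tendsto_eventually[OF ev] .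
  then have "f 0 = 0" using lim tendsto_unique by (metis at_neq_bot)
  moreover have "f 0 = c 0" unfolding f_def using powser_zero by simp
  ultimately show ?thesis by simp
qed

lemma powser_zero_coeffs:
  fixes c :: "nat \<Rightarrow> complex"
  assumes "\<And>t. t \<noteq> 0 \<Longrightarrow> (\<lambda>n. c n * t^n) sums 0"
  shows "c n = 0"
  using assms
proof (induction n arbitrary: c)
  case 0
  show ?case by (rule powser_zero_coeff0) (rule "0.prems")
next
  case (Suc n)
  have c0: "c 0 = 0" by (rule powser_zero_coeff0) (rule Suc.prems)
  show ?case
  proof (rule Suc.IH[of "\<lambda>n. c (Suc n)", simplified])
    fix t :: complex assume t: "t \<noteq> 0"
    have "(\<lambda>n. c (Suc n) * t ^ (Suc n)) sums 0"
      using Suc.prems[OF t] c0 by (subst sums_Suc_iff) simp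
    then have "(\<lambda>n. (1/t) * (c (Suc n) * t ^ (Suc n))) sums ((1/t) * 0)" by (rule sums_mult)
    then show "(\<lambda>n. c (Suc n) * t ^ n) sums 0" using t by (simp add: field_simps)
  qed
qed

definition qq :: "(nat \<Rightarrow> real) \<Rightarrow> nat \<Rightarrow> complex" where
  "qq a k = complex_of_real (1 - a k)"
definition EE :: "nat \<Rightarrow> complex \<Rightarrow> complex" where
  "EE n Q = (if even n then (-Q/2)^(n div 2) / fact (n div 2) else 0)"
definition cfq :: "complex \<Rightarrow> nat \<Rightarrow> complex" where
  "cfq q r = (if even r then (-q/2)^(r div 2) / fact (r div 2) else 0)"

lemma prod_list_scale: "prod_list (map (\<lambda>k. t * \<xi> k) ks) = t ^ length ks * prod_list (map \<xi> ks)"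
  for t :: complex by (induct ks) auto

lemma EE_sums: "(\<lambda>n. EE n Q * t^n) sums exp (- (1/2) * (t^2 * Q))"
proof -
  have "(\<lambda>m. (- (1/2) * (t^2 * Q))^m /\<^sub>R fact m) sums exp (- (1/2) * (t^2 * Q))"
    by (rule exp_converges)
  moreover have "(\<lambda>m. EE (2*m) Q * t^(2*m)) = (\<lambda>m. (- (1/2) * (t^2 * Q))^m /\<^sub>R fact m)"
  proof (rule ext)
    fix m
    have 1: "t^(2*m) = (t^2)^m" by (simp add: power_mult)
    have 2: "(- (1/2) * (t^2 * Q)) = t^2 * (-Q/2)" by simp
    show "EE (2*m) Q * t^(2*m) = (- (1/2) * (t^2 * Q))^m /\<^sub>R fact m"
      unfolding 1 2 power_mult_distrib by (simp add: EE_def scaleR_conv_of_real field_simps)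
  qed
  ultimately have "(\<lambda>m. EE (2*m) Q * t^(2*m)) sums exp (- (1/2) * (t^2 * Q))" by simp
  moreover have "strict_mono (\<lambda>m::nat. 2*m)" by (rule strict_monoI) simp
  moreover have "EE n Q * t^n = 0" if "n \<notin> range (\<lambda>m::nat. 2*m)" for n
    using that by (auto simp: EE_def elim!: evenE)
  ultimately show ?thesis using sums_mono_reindex[of "\<lambda>m::nat. 2*m" "\<lambda>n. EE n Q * t^n"] by blast
qed

lemma S_pair_EE:
  assumes gauss: "is_gauss_kernel a F" and fin: "finite {k. \<xi> k \<noteq> 0}"
  shows "S_pair F n \<xi> = EE n (\<Sum>k\<in>{k. \<xi> k \<noteq> 0}. qq a k * (\<xi> k)^2)"
proof -
  define S where "S = {k. \<xi> k \<noteq> 0}"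
  define Q where "Q = (\<Sum>k\<in>S. qq a k * (\<xi> k)^2)"
  have "(\<lambda>n. S_pair F n \<xi> - EE n Q) = (\<lambda>n. 0)"
  proof (rule ext, rule powser_zero_coeffs)
    fix n and t :: complex assume t: "t \<noteq> 0"
    define \<eta> where "\<eta> k = t * \<xi> k" for k
    have S\<eta>: "{k. \<eta> k \<noteq> 0} = S" unfolding \<eta>_def S_def using t by auto
    have \<eta>l: "\<eta> = (\<lambda>k. t * \<xi> k)" by (rule ext) (simp add: \<eta>_def)
    have fin\<eta>: "finite {k. \<eta> k \<noteq> 0}" using S\<eta> fin unfolding S_def by simp
    have "(\<lambda>n. S_pair F n \<eta>) sums exp (- (1/2) * (\<Sum>k\<in>{k. \<eta> k \<noteq> 0}. complex_of_real (1 - a k) * (\<eta> k)^2))"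
      using gauss fin\<eta> unfolding is_gauss_kernel_def by blast
    then have 1: "(\<lambda>n. S_pair F n \<eta>) sums exp (- (1/2) * (\<Sum>k\<in>S. complex_of_real (1 - a k) * (\<eta> k)^2))"
      unfolding S\<eta> .
    have "(\<Sum>k\<in>S. complex_of_real (1 - a k) * (\<eta> k)^2) = t^2 * Q"
      unfolding Q_def qq_def \<eta>_def by (simp add: sum_distrib_left power_mult_distrib mult_ac)
    moreover have "S_pair F n \<eta> = S_pair F n \<xi> * t^n" for n
    proof -
      have "S_pair F n \<eta> = (\<Sum>ks\<in>{ks. length ks = n \<and> set ks \<subseteq> S}. t^n * (F n ks * prod_list (map \<xi> ks)))"
        unfolding S_pair_def S\<eta> by (rule sum.cong) (auto simp: \<eta>l prod_list_scale)
      then show ?thesis unfolding S_pair_def S_def by (simp add: sum_distrib_left mult_ac)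
    qed
    ultimately have "(\<lambda>n. S_pair F n \<xi> * t^n) sums exp (- (1/2) * (t^2 * Q))" using 1 by simp
    from sums_diff[OF this EE_sums[of Q t]]
    show "(\<lambda>n. (S_pair F n \<xi> - EE n Q) * t^n) sums 0" by (simp add: algebra_simps)
  qed
  then show ?thesis unfolding Q_def S_def by (metis right_minus_eq)
qed

lemma Ident:
  assumes gauss: "is_gauss_kernel a F" and \<xi>: "\<forall>k\<ge>N. \<xi> k = 0"
  shows "(\<Sum>ks\<in>LL {..<N} n. F n ks * prod_list (map \<xi> ks)) = EE n (\<Sum>k<N. qq a k * (\<xi> k)^2)"
proof -
  define S where "S = {k. \<xi> k \<noteq> 0}"
  have SN: "S \<subseteq> {..<N}" unfolding S_def using \<xi> by (auto simp: not_less[symmetric])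
  have finS: "finite S" using SN finite_subset by blast
  have "(\<Sum>ks\<in>LL {..<N} n. F n ks * prod_list (map \<xi> ks)) = (\<Sum>ks\<in>LL S n. F n ks * prod_list (map \<xi> ks))"
  proof (rule sum.mono_neutral_right)
    show "finite (LL {..<N} n)" by (rule finite_LL) simp
    show "LL S n \<subseteq> LL {..<N} n" using SN unfolding LL_def by auto
    show "\<forall>i\<in>LL {..<N} n - LL S n. F n i * prod_list (map \<xi> i) = 0"
    proof
      fix ks assume "ks \<in> LL {..<N} n - LL S n"
      then obtain k where "k \<in> set ks" "k \<notin> S" unfolding LL_def by auto
      then have "0 \<in> set (map \<xi> ks)" unfolding S_def by force
      then show "F n ks * prod_list (map \<xi> ks) = 0" by (simp add: prod_list_zero_iff)
    qed
  qed
  also have "\<dots> = S_pair F n \<xi>" unfolding S_pair_def LL_def S_def by (simp add: conj_commute)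
  also have "\<dots> = EE n (\<Sum>k\<in>S. qq a k * (\<xi> k)^2)" unfolding S_def by (rule S_pair_EE[OF gauss finS[unfolded S_def]])
  also have "(\<Sum>k\<in>S. qq a k * (\<xi> k)^2) = (\<Sum>k<N. qq a k * (\<xi> k)^2)"
    by (rule sum.mono_neutral_left) (use SN in \<open>auto simp: S_def\<close>)
  finally show ?thesis .
qed

lemma even_sum:
  fixes g :: "nat \<Rightarrow> 'a::comm_monoid_add" and m :: nat
  assumes "\<And>r. odd r \<Longrightarrow> g r = (0::'a::comm_monoid_add)"
  shows "(\<Sum>r\<le>2*m. g r) = (\<Sum>i\<le>m. g (2*i))"
proof (induction m)
  case 0 then show ?case by simp
next
  case (Suc m)
  have "2 * Suc m = Suc (Suc (2*m))" by simp
  then have "(\<Sum>r\<le>2*Suc m. g r) = (\<Sum>r\<le>2*m. g r) + g (Suc (2*m)) + g (2 * Suc m)"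
    by (simp add: add.assoc)
  also have "g (Suc (2*m)) = 0" using assms by simp
  finally show ?case using Suc.IH by simp
qed

lemma ExpandE:
  "EE n (Q + q * x^2) = (\<Sum>r\<le>n. (cfq q r * EE (n - r) Q) * x^r)"
proof (cases "even n")
  case False
  have "(cfq q r * EE (n - r) Q) * x^r = 0" if "r \<le> n" for r
    using False that by (cases "even r") (auto simp: cfq_def EE_def)
  then have "(\<Sum>r\<le>n. (cfq q r * EE (n - r) Q) * x^r) = 0" by (intro sum.neutral) auto
  then show ?thesis using False by (simp add: EE_def)
next
  case True
  then obtain m where n: "n = 2*m" by (elim evenE)
  have "EE n (Q + q * x^2) = ((-q/2) * x^2 + (-Q/2))^m / fact m"
    unfolding EE_def n by (simp add: field_simps)
  also have "\<dots> = (\<Sum>i\<le>m. of_nat (m choose i) * ((-q/2) * x^2)^i * (-Q/2)^(m-i)) / fact m"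
    by (subst binomial_ring) (rule refl)
  also have "\<dots> = (\<Sum>i\<le>m. (cfq q (2*i) * EE (n - 2*i) Q) * x^(2*i))"
    unfolding sum_divide_distrib
  proof (intro sum.cong refl)
    fix i assume i: "i \<in> {..m}"
    have nn: "n - 2*i = 2*(m-i)" using n by simp
    have bf: "of_nat (m choose i) = (fact m / (fact i * fact (m - i)) :: complex)"
      using i by (simp add: binomial_fact)
    have e0: "(x^2)^i = x^(2*i)" by (simp add: power_mult)
    have e1: "((-q/2) * x^2)^i = (-q/2)^i * x^(2*i)" unfolding e0[symmetric] by (rule power_mult_distrib)
    show "of_nat (m choose i) * ((-q/2) * x^2)^i * (-Q/2)^(m-i) / fact m = (cfq q (2*i) * EE (n - 2*i) Q) * x^(2*i)"
      unfolding bf nn e1 by (simp add: cfq_def EE_def field_simps)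
  qed
  also have "\<dots> = (\<Sum>r\<le>n. (cfq q r * EE (n - r) Q) * x^r)"
    unfolding n by (rule even_sum[symmetric]) (simp add: cfq_def)
  finally show ?thesis .
qed

lemma symF: "is_gauss_kernel a F \<Longrightarrow> mset xs = mset ys \<Longrightarrow> F n xs = F n ys"
  unfolding is_gauss_kernel_def by blast

lemma split_upd:
  fixes G :: "nat list \<Rightarrow> complex"
  assumes sym: "\<And>xs ys. mset xs = mset ys \<Longrightarrow> G xs = G ys"
  shows "(\<Sum>ks\<in>LL {..<Suc N} n. G ks * prod_list (map (\<xi>(N := x)) ks)) =
     (\<Sum>i\<le>n. (of_nat (n choose i) * (\<Sum>ys\<in>LL {..<N} (n-i). G (replicate i N @ ys) * prod_list (map \<xi> ys))) * x^i)"
proof -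
  have KS: "{..<Suc N} = insert N {..<N}" by auto
  have "(\<Sum>ks\<in>LL {..<Suc N} n. G ks * prod_list (map (\<xi>(N := x)) ks)) =
     (\<Sum>i\<le>n. of_nat (n choose i) * (\<Sum>ys\<in>LL {..<N} (n-i). G (replicate i N @ ys) * prod_list (map (\<xi>(N := x)) (replicate i N @ ys))))"
    unfolding KS by (rule split_sum) (auto intro: sym prod_list_map_sym arg_cong2[where f="(*)"])
  also have "\<dots> = (\<Sum>i\<le>n. (of_nat (n choose i) * (\<Sum>ys\<in>LL {..<N} (n-i). G (replicate i N @ ys) * prod_list (map \<xi> ys))) * x^i)"
  proof (intro sum.cong refl)
    fix i assume "i \<in> {..n}"
    have pe: "prod_list (map (\<xi>(N := x)) (replicate i N @ ys)) = x^i * prod_list (map \<xi> ys)" if "ys \<in> LL {..<N} (n-i)" for ys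
    proof -
      have m: "map (\<xi>(N := x)) ys = map \<xi> ys" using that unfolding LL_def by (auto intro!: map_cong)
      have "(\<xi>(N := x)) N = x" by simp
      with m show ?thesis
        by (simp only: map_append map_replicate prod_list.append prod_list_replicate)
    qed
    have s: "(\<Sum>ys\<in>LL {..<N} (n-i). G (replicate i N @ ys) * prod_list (map (\<xi>(N := x)) (replicate i N @ ys)))
       = x^i * (\<Sum>ys\<in>LL {..<N} (n-i). G (replicate i N @ ys) * prod_list (map \<xi> ys))"
      unfolding sum_distrib_left by (rule sum.cong[OF refl]) (simp only: pe mult_ac)
    show "of_nat (n choose i) * (\<Sum>ys\<in>LL {..<N} (n-i). G (replicate i N @ ys) * prod_list (map (\<xi>(N := x)) (replicate i N @ ys))) =
      (of_nat (n choose i) * (\<Sum>ys\<in>LL {..<N} (n-i). G (replicate i N @ ys) * prod_list (map \<xi> ys))) * x^i"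
      unfolding s by (simp only: mult_ac)
  qed
  finally show ?thesis .
qed

lemma Rec:
  assumes gauss: "is_gauss_kernel a F" and ks: "ks \<in> LL {..<N} (n - r)" and rn: "r \<le> n"
  shows "of_nat (n choose r) * F n (replicate r N @ ks) = cfq (qq a N) r * F (n - r) ks"
proof -
  define D where "D ys = of_nat (n choose r) * F n (replicate r N @ ys) - cfq (qq a N) r * F (n-r) ys" for ys
  have "D ks = 0"
  proof (rule uniq[where N=N and n="n-r"])
    show "\<And>xs ys. mset xs = mset ys \<Longrightarrow> D xs = D ys"
    proof -
      fix xs ys :: "nat list" assume m: "mset xs = mset ys"
      then have "mset (replicate r N @ xs) = mset (replicate r N @ ys)" by simp
      then show "D xs = D ys" unfolding D_def using symF[OF gauss m] symF[OF gauss] by metis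
    qed
    show "ks \<in> LL {..<N} (n - r)" by (rule ks)
    fix \<xi> :: "nat \<Rightarrow> complex" assume \<xi>: "\<forall>k\<ge>N. \<xi> k = 0"
    define Q where "Q = (\<Sum>k<N. qq a k * (\<xi> k)^2)"
    define c where "c i = of_nat (n choose i) * (\<Sum>ys\<in>LL {..<N} (n-i). F n (replicate i N @ ys) * prod_list (map \<xi> ys))
        - cfq (qq a N) i * EE (n-i) Q" for i
    have "\<forall>x. (\<Sum>i\<le>n. c i * x^i) = 0"
    proof
      fix x :: complex
      have \<xi>x: "\<forall>k\<ge>Suc N. (\<xi>(N := x)) k = 0" using \<xi> by auto
      have Qx: "(\<Sum>k<Suc N. qq a k * ((\<xi>(N := x)) k)^2) = Q + qq a N * x^2"
        unfolding Q_def by simp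
      have "(\<Sum>i\<le>n. (of_nat (n choose i) * (\<Sum>ys\<in>LL {..<N} (n-i). F n (replicate i N @ ys) * prod_list (map \<xi> ys))) * x^i)
          = (\<Sum>ks\<in>LL {..<Suc N} n. F n ks * prod_list (map (\<xi>(N := x)) ks))"
        by (rule split_upd[symmetric]) (rule symF[OF gauss])
      also have "\<dots> = EE n (Q + qq a N * x^2)" by (simp only: Ident[OF gauss \<xi>x] Qx)
      also have "\<dots> = (\<Sum>i\<le>n. (cfq (qq a N) i * EE (n - i) Q) * x^i)" by (rule ExpandE)
      finally show "(\<Sum>i\<le>n. c i * x^i) = 0"
        unfolding c_def by (simp add: left_diff_distrib sum_subtractf)
    qed
    then have "c r = 0" using polyfun_eq_0[of c n] rn by blast
    moreover have "EE (n-r) Q = (\<Sum>ys\<in>LL {..<N} (n-r). F (n-r) ys * prod_list (map \<xi> ys))"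
      unfolding Q_def by (rule Ident[OF gauss \<xi>, symmetric])
    ultimately show "(\<Sum>ys\<in>LL {..<N} (n - r). D ys * prod_list (map \<xi> ys)) = 0"
      unfolding c_def D_def by (simp add: left_diff_distrib right_diff_distrib sum_subtractf sum_distrib_left mult_ac)
  qed
  then show ?thesis unfolding D_def by simp
qed

lemma F00: assumes gauss: "is_gauss_kernel a F" shows "F 0 [] = 1"
  using Ident[OF gauss, of 0 "\<lambda>_. 0" 0] by (simp add: EE_def)

definition TT :: "(nat \<Rightarrow> nat list \<Rightarrow> complex) \<Rightarrow> nat \<Rightarrow> nat \<Rightarrow> real" where
  "TT F N n = (\<Sum>ks\<in>LL {..<N} n. (cmod (F n ks))^2)"
definition bb :: "(nat \<Rightarrow> nat list \<Rightarrow> complex) \<Rightarrow> nat \<Rightarrow> nat \<Rightarrow> real" where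
  "bb F N n = fact n * TT F N n"
definition uu :: "real \<Rightarrow> nat \<Rightarrow> real" where
  "uu q r = (cmod (cfq (complex_of_real q) r))^2 * fact r"

lemma TT_nonneg: "TT F N n \<ge> 0" unfolding TT_def by (intro sum_nonneg) auto
lemma bb_nonneg: "bb F N n \<ge> 0" unfolding bb_def using TT_nonneg by simp
lemma uu_nonneg: "uu q r \<ge> 0" unfolding uu_def by simp

lemma bb_rec:
  assumes gauss: "is_gauss_kernel a F"
  shows "bb F (Suc N) n = (\<Sum>r\<le>n. uu (1 - a N) r * bb F N (n-r))"
proof -
  have KS: "{..<Suc N} = insert N {..<N}" by auto
  have "TT F (Suc N) n = (\<Sum>r\<le>n. of_nat (n choose r) * (\<Sum>ys\<in>LL {..<N} (n-r). (cmod (F n (replicate r N @ ys)))^2))"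
    unfolding TT_def KS by (rule split_sum) (auto dest: symF[OF gauss, of _ _ n])
  also have "\<dots> = (\<Sum>r\<le>n. (cmod (cfq (qq a N) r))^2 / of_nat (n choose r) * TT F N (n-r))"
  proof (intro sum.cong refl)
    fix r assume r: "r \<in> {..n}"
    have C: "real (n choose r) > 0" using r by simp
    have "of_nat (n choose r) * (cmod (F n (replicate r N @ ys)))^2 =
          (cmod (cfq (qq a N) r))^2 / of_nat (n choose r) * (cmod (F (n-r) ys))^2"
      if ys: "ys \<in> LL {..<N} (n-r)" for ys
    proof -
      have "cmod (of_nat (n choose r) * F n (replicate r N @ ys)) = cmod (cfq (qq a N) r * F (n - r) ys)"
        using Rec[OF gauss ys] r by simp
      then have "real (n choose r) * cmod (F n (replicate r N @ ys)) = cmod (cfq (qq a N) r) * cmod (F (n - r) ys)"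
        by (simp add: norm_mult)
      then have "(real (n choose r) * cmod (F n (replicate r N @ ys)))^2 = (cmod (cfq (qq a N) r) * cmod (F (n - r) ys))^2"
        by simp
      then show ?thesis using C by (simp add: field_simps power_mult_distrib power2_eq_square)
    qed
    then show "of_nat (n choose r) * (\<Sum>ys\<in>LL {..<N} (n-r). (cmod (F n (replicate r N @ ys)))^2) =
      (cmod (cfq (qq a N) r))^2 / of_nat (n choose r) * TT F N (n-r)"
      unfolding TT_def sum_distrib_left by (rule sum.cong[OF refl])
  qed
  finally have T: "TT F (Suc N) n = (\<Sum>r\<le>n. (cmod (cfq (qq a N) r))^2 / of_nat (n choose r) * TT F N (n-r))" .
  have "bb F (Suc N) n = (\<Sum>r\<le>n. fact n * ((cmod (cfq (qq a N) r))^2 / of_nat (n choose r) * TT F N (n-r)))"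
    unfolding bb_def T sum_distrib_left ..
  also have "\<dots> = (\<Sum>r\<le>n. uu (1 - a N) r * bb F N (n-r))"
  proof (intro sum.cong refl)
    fix r assume r: "r \<in> {..n}"
    have e2: "(fact n :: real) = real (n choose r) * (fact r * fact (n - r))"
      using r binomial_fact_lemma[of r n] by (metis atMost_iff mult.commute of_nat_fact of_nat_mult)
    have C: "real (n choose r) \<noteq> 0" using r by simp
    show "fact n * ((cmod (cfq (qq a N) r))^2 / of_nat (n choose r) * TT F N (n-r)) = uu (1 - a N) r * bb F N (n-r)"
      unfolding uu_def bb_def qq_def e2 using C by (simp add: field_simps)
  qed
  finally show ?thesis .
qed

lemma cb: "fact (2*i) / (fact i)^2 / 4^i = ((-1/2::real) gchoose i) * (-1)^i"
proof (induction i)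
  case 0 then show ?case by simp
next
  case (Suc i)
  have g: "((-1/2::real) gchoose Suc i) = ((-1/2) - of_nat i) * ((-1/2) gchoose i) / of_nat (Suc i)"
    using gbinomial_mult_1[of "-1/2::real" i] by (simp add: field_simps)
  have f1: "fact (2 * Suc i) = (of_nat (2*i+2) * of_nat (2*i+1) * fact (2*i) :: real)"
    by (simp add: fact_Suc algebra_simps)
  have f2: "(fact (Suc i) :: real)^2 = of_nat (Suc i)^2 * (fact i)^2"
    by (simp only: fact_Suc of_nat_mult power_mult_distrib)
  have gen: "A * B * C / (x^2 * y^2) / (4 * z) = (C / y^2 / z) * (A * B / (x^2 * 4))"
    if "x > 0" "y > 0" "z > 0" for A B C x y z :: real
    using that by (simp add: field_simps)
  have k: "(2*x) * (2*x - 1) / (x^2 * 4) = (2*x - 1) / (2*x)" if "x > 0" for x :: real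
    using that by (simp add: field_simps power2_eq_square)
  have "fact (2 * Suc i) / (fact (Suc i))^2 / 4^(Suc i) =
      (fact (2*i) / (fact i)^2 / 4^i) * (real (2*i+2) * real (2*i+1) / (real (Suc i)^2 * 4))"
    unfolding f1 f2 power_Suc by (rule gen) auto
  also have "real (2*i+2) * real (2*i+1) / (real (Suc i)^2 * 4) = (2*i+1) / (2*(i+1))"
    using k[of "real (Suc i)"] by (simp add: algebra_simps)
  finally have "fact (2 * Suc i) / (fact (Suc i))^2 / 4^(Suc i) = (fact (2*i) / (fact i)^2 / 4^i) * ((2*i+1) / (2*(i+1)) :: real)" .
  also have "\<dots> = ((-1/2::real) gchoose i) * (-1)^i * ((2*i+1) / (2*(i+1)))" using Suc.IH by simp
  also have "\<dots> = ((-1/2::real) gchoose Suc i) * (-1)^(Suc i)" unfolding g by (simp add: field_simps)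
  finally show ?case .
qed

lemma uu_sums:
  assumes q: "\<bar>q\<bar> < 1" and s: "0 \<le> s" "s \<le> 1"
  shows "(\<lambda>r. uu q r * s^r) sums ((1 - s^2 * q^2) powr (-1/2))"
proof -
  have z: "\<bar>-(s^2*q^2)\<bar> < 1"
  proof -
    have "s^2 \<le> 1" using s by (simp add: power_le_one)
    moreover have "q^2 < 1" using q by (simp add: abs_square_less_1)
    moreover have "s^2 * q^2 \<le> q^2" using \<open>s^2 \<le> 1\<close> by (simp add: mult_left_le_one_le)
    ultimately have "s^2 * q^2 < 1" by linarith
    then show ?thesis by simp
  qed
  have "(\<lambda>i. ((-1/2::real) gchoose i) * (-(s^2*q^2))^i) sums (1 + (-(s^2*q^2))) powr (-1/2)"
    by (rule gen_binomial_real[OF z])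
  moreover have "uu q (2*i) * s^(2*i) = ((-1/2::real) gchoose i) * (-(s^2*q^2))^i" for i
  proof -
    have "cfq (complex_of_real q) (2*i) = complex_of_real ((-q/2)^i / fact i)"
      unfolding cfq_def by simp
    then have "uu q (2*i) = ((-q/2)^i / fact i)^2 * fact (2*i)"
      unfolding uu_def by (simp only: norm_of_real power2_abs)
    also have "\<dots> = (fact (2*i) / (fact i)^2 / 4^i) * (q^2)^i"
    proof -
      have "((-q/2)^i)^2 = ((-q/2)^2)^i" by (simp flip: power_mult add: mult.commute)
      also have "(-q/2)^2 = q^2/4" by (simp add: power2_eq_square)
      finally have "((-q/2)^i)^2 = (q^2)^i / 4^i" by (simp add: power_divide)
      then show ?thesis by (simp add: power_divide mult_ac)
    qed
    finally have "uu q (2*i) * s^(2*i) = (fact (2*i) / (fact i)^2 / 4^i) * (q^2)^i * (s^2)^i"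
      by (simp add: power_mult)
    also have "\<dots> = ((-1/2::real) gchoose i) * (-(s^2*q^2))^i"
    proof -
      have m1: "(-(s^2*q^2))^i = (-1)^i * ((q^2)^i * (s^2)^i)"
        by (subst power_minus) (simp only: power_mult_distrib mult.commute)
      show ?thesis unfolding cb m1 by (simp only: mult_ac)
    qed
    finally show ?thesis .
  qed
  ultimately have "(\<lambda>i. uu q (2*i) * s^(2*i)) sums ((1 - s^2 * q^2) powr (-1/2))" by simp
  moreover have "strict_mono (\<lambda>m::nat. 2*m)" by (rule strict_monoI) simp
  moreover have "uu q r * s^r = 0" if "r \<notin> range (\<lambda>m::nat. 2*m)" for r
    using that by (auto simp: uu_def cfq_def elim!: evenE)
  ultimately show ?thesis using sums_mono_reindex[of "\<lambda>m::nat. 2*m" "\<lambda>r. uu q r * s^r"] by blast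
qed

lemma GF:
  assumes gauss: "is_gauss_kernel a F" and eig: "\<And>k. 0 < a k \<and> a k < 2"
    and s: "0 \<le> s" "s \<le> 1"
  shows "(\<lambda>n. bb F N n * s^n) sums ((\<Prod>k<N. 1 - s^2 * (1 - a k)^2) powr (-1/2))"
proof (induction N)
  case 0
  have "bb F 0 n * s^n = (if n = 0 then 1 else 0)" for n
  proof (cases n)
    case 0 then show ?thesis using F00[OF gauss] by (simp add: bb_def TT_def)
  next
    case (Suc m)
    have "LL {..<0} n = {}" using Suc unfolding LL_def by auto
    then show ?thesis using Suc by (simp add: bb_def TT_def)
  qed
  then show ?case using sums_single[of 0 "\<lambda>_. 1::real"] by simp
next
  case (Suc N)
  define q where "q = 1 - a N"
  have q: "\<bar>q\<bar> < 1" using eig[of N] unfolding q_def by auto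
  have U: "(\<lambda>r. uu q r * s^r) sums ((1 - s^2 * q^2) powr (-1/2))" by (rule uu_sums[OF q s])
  have P0: "(\<Prod>k<N. 1 - s^2 * (1 - a k)^2) \<ge> 0"
  proof (intro prod_nonneg ballI)
    fix k
    have "\<bar>1 - a k\<bar> < 1" using eig[of k] by auto
    then have "(1 - a k)^2 \<le> 1" by (simp add: abs_square_le_1)
    moreover have "s^2 \<le> 1" using s by (simp add: power_le_one)
    ultimately have "s^2 * (1 - a k)^2 \<le> 1" by (simp add: mult_le_one)
    then show "0 \<le> 1 - s^2 * (1 - a k)^2" by simp
  qed
  have P1: "1 - s^2 * q^2 \<ge> 0"
  proof -
    have "q^2 \<le> 1" using q by (simp add: abs_square_le_1)
    moreover have "s^2 \<le> 1" using s by (simp add: power_le_one)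
    ultimately have "s^2 * q^2 \<le> 1" by (simp add: mult_le_one)
    then show ?thesis by simp
  qed
  have nU: "summable (\<lambda>r. norm (uu q r * s^r))"
    using sums_summable[OF U] uu_nonneg s by (simp add: abs_mult)
  have nB: "summable (\<lambda>n. norm (bb F N n * s^n))"
    using sums_summable[OF Suc.IH] bb_nonneg s by (simp add: abs_mult)
  have "(\<lambda>n. \<Sum>r\<le>n. (uu q r * s^r) * (bb F N (n - r) * s^(n-r))) sums
        ((\<Sum>r. uu q r * s^r) * (\<Sum>n. bb F N n * s^n))"
    by (rule Cauchy_product_sums[OF nU nB])
  moreover have "(\<Sum>r. uu q r * s^r) * (\<Sum>n. bb F N n * s^n) = (\<Prod>k<Suc N. 1 - s^2 * (1 - a k)^2) powr (-1/2)"
    using sums_unique[OF U] sums_unique[OF Suc.IH] P0 P1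
    by (simp add: powr_mult q_def mult_ac)
  moreover have "(\<Sum>r\<le>n. (uu q r * s^r) * (bb F N (n - r) * s^(n-r))) = bb F (Suc N) n * s^n" for n
  proof -
    have "(\<Sum>r\<le>n. (uu q r * s^r) * (bb F N (n - r) * s^(n-r))) = (\<Sum>r\<le>n. (uu q r * bb F N (n - r)) * s^n)"
    proof (intro sum.cong refl)
      fix r assume "r \<in> {..n}"
      then have "s^r * s^(n-r) = s^n" by (simp flip: power_add)
      then show "(uu q r * s^r) * (bb F N (n - r) * s^(n-r)) = (uu q r * bb F N (n - r)) * s^n"
        by (metis mult.assoc mult.left_commute)
    qed
    also have "\<dots> = bb F (Suc N) n * s^n"
      unfolding bb_rec[OF gauss] q_def sum_distrib_right ..
    finally show ?thesis .
  qed
  ultimately show ?case by simp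
qed

lemma LL_mono: "N \<le> M \<Longrightarrow> LL {..<N} n \<subseteq> LL {..<M} n"
  unfolding LL_def by auto

lemma TT_mono: "N \<le> M \<Longrightarrow> TT F N n \<le> TT F M n"
  unfolding TT_def by (rule sum_mono2[OF finite_LL LL_mono]) auto

lemma TT_incseq: "incseq (\<lambda>N. TT F N n)"
  by (rule incseq_SucI) (rule TT_mono, simp)

lemma bb_incseq: "incseq (\<lambda>N. bb F N n)"
  unfolding bb_def using TT_incseq[of F n] by (auto simp: incseq_def intro: mult_left_mono)

lemma finite_sub_LL:
  assumes "finite E" "E \<subseteq> {ks. length ks = n}"
  shows "\<exists>N. E \<subseteq> LL {..<N} n"
proof -
  define N where "N = Suc (Max (insert 0 (\<Union>ks\<in>E. set ks)))"
  have fin: "finite (insert 0 (\<Union>ks\<in>E. set ks))" using assms(1) by simp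
  have "E \<subseteq> LL {..<N} n"
  proof
    fix ks assume ks: "ks \<in> E"
    have "\<forall>k\<in>set ks. k < N"
    proof
      fix k assume "k \<in> set ks"
      then have "k \<le> Max (insert 0 (\<Union>ks\<in>E. set ks))" using ks fin by (intro Max_ge) auto
      then show "k < N" unfolding N_def by simp
    qed
    then show "ks \<in> LL {..<N} n" using ks assms(2) unfolding LL_def by auto
  qed
  then show ?thesis by blast
qed

lemma KN:
  assumes bound: "\<And>N. TT F N n \<le> C"
  shows "(\<lambda>ks. (cmod (F n ks))^2) summable_on {ks. length ks = n}"
    and "(\<lambda>N. TT F N n) \<longlonglongrightarrow> kernel_norm2 F n"
proof -
  define f where "f ks = (cmod (F n ks))^2" for ks
  define A where "A = {ks :: nat list. length ks = n}"
  have LLA: "LL {..<N} n \<subseteq> A" for N unfolding LL_def A_def by auto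
  have fE: "sum f E \<le> (SUP N. TT F N n)" if fin: "finite E" and sub: "E \<subseteq> A" for E
  proof -
    obtain N where N: "E \<subseteq> LL {..<N} n" using finite_sub_LL[OF fin sub[unfolded A_def]] by blast
    have "sum f E \<le> TT F N n" unfolding TT_def f_def
      by (rule sum_mono2[OF finite_LL N]) auto
    also have "\<dots> \<le> (SUP N. TT F N n)"
      by (rule cSUP_upper[OF _ bdd_aboveI2[where M=C, OF bound]]) simp
    finally show ?thesis .
  qed
  have sm: "f summable_on A"
  proof (rule nonneg_bdd_above_summable_on)
    show "bdd_above (sum f ` {E. E \<subseteq> A \<and> finite E})"
      using fE by (intro bdd_aboveI2[where M="SUP N. TT F N n"]) auto
  qed (auto simp: f_def)
  then show "(\<lambda>ks. (cmod (F n ks))^2) summable_on {ks. length ks = n}" unfolding f_def A_def .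
  have inf: "infsum f A = (SUP E\<in>{E. finite E \<and> E \<subseteq> A}. sum f E)"
    by (rule infsum_nonneg_is_SUPREMUM_real[OF sm]) (auto simp: f_def)
  have bddE: "bdd_above (sum f ` {E. finite E \<and> E \<subseteq> A})"
    using fE by (intro bdd_aboveI2[where M="SUP N. TT F N n"]) auto
  have "(SUP N. TT F N n) = infsum f A"
  proof (rule antisym)
    show "(SUP N. TT F N n) \<le> infsum f A"
    proof (rule cSUP_least)
      fix N
      have "TT F N n = sum f (LL {..<N} n)" unfolding TT_def f_def ..
      also have "\<dots> \<le> (SUP E\<in>{E. finite E \<and> E \<subseteq> A}. sum f E)"
        by (rule cSUP_upper[OF _ bddE]) (use LLA finite_LL in auto)
      finally show "TT F N n \<le> infsum f A" unfolding inf .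
    qed simp
    show "infsum f A \<le> (SUP N. TT F N n)"
      unfolding inf by (rule cSUP_least) (use fE in auto)
  qed
  moreover have "(\<lambda>N. TT F N n) \<longlonglongrightarrow> (SUP N. TT F N n)"
    by (rule LIMSEQ_incseq_SUP[OF bdd_aboveI2[where M=C, OF bound] TT_incseq])
  ultimately show "(\<lambda>N. TT F N n) \<longlonglongrightarrow> kernel_norm2 F n"
    unfolding kernel_norm2_def f_def A_def by simp
qed

lemma MCT_series:
  fixes u :: "nat \<Rightarrow> nat \<Rightarrow> real"
  assumes nn: "\<And>N n. 0 \<le> u N n" and inc: "\<And>N n. u N n \<le> u (Suc N) n"
    and lim: "\<And>n. (\<lambda>N. u N n) \<longlonglongrightarrow> w n"
    and S: "\<And>N. (\<lambda>n. u N n) sums S N" and Slim: "S \<longlonglongrightarrow> T"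
  shows "w sums T"
proof -
  have incn: "incseq (\<lambda>N. u N n)" for n using inc by (rule incseq_SucI)
  have wge: "u N n \<le> w n" for N n by (rule incseq_le[OF incn lim])
  have wnn: "0 \<le> w n" for n using nn[of 0 n] wge[of 0 n] by linarith
  have incS: "incseq S"
  proof (rule incseq_SucI)
    fix N show "S N \<le> S (Suc N)"
      using sums_le[OF _ S S] inc by blast
  qed
  have ST: "S N \<le> T" for N by (rule incseq_le[OF incS Slim])
  have part: "(\<Sum>n\<le>M. w n) \<le> T" for M
  proof -
    have "(\<lambda>N. \<Sum>n\<le>M. u N n) \<longlonglongrightarrow> (\<Sum>n\<le>M. w n)" by (intro tendsto_sum lim)
    moreover have "(\<Sum>n\<le>M. u N n) \<le> T" for N
    proof -
      have "(\<Sum>n\<le>M. u N n) \<le> S N"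
        using sum_le_suminf[OF sums_summable[OF S[of N]], of "{..M}"] nn sums_unique[OF S[of N]] by auto
      then show ?thesis using ST[of N] by linarith
    qed
    ultimately show ?thesis by (intro LIMSEQ_le_const2) auto
  qed
  have sw: "summable w" by (rule bounded_imp_summable[OF wnn part])
  have "suminf w \<le> T"
  proof (rule suminf_le_const[OF sw])
    fix M
    have "(\<Sum>n<M. w n) \<le> (\<Sum>n\<le>M. w n)" by (rule sum_mono2) (auto simp: wnn)
    then show "(\<Sum>n<M. w n) \<le> T" using part[of M] by linarith
  qed
  moreover have "T \<le> suminf w"
  proof (rule LIMSEQ_le_const2[OF Slim])
    show "\<exists>N0. \<forall>N\<ge>N0. S N \<le> suminf w"
    proof (intro exI allI impI)
      fix N
      show "S N \<le> suminf w"
        using suminf_le[OF wge sums_summable[OF S[of N]] sw] sums_unique[OF S[of N]] by simp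
    qed
  qed
  ultimately have "suminf w = T" by simp
  then show ?thesis using summable_sums[OF sw] by simp
qed

lemma prod_conv:
  fixes f :: "nat \<Rightarrow> real"
  assumes "\<And>k. 0 \<le> f k \<and> f k \<le> 1"
  shows "(\<lambda>N. \<Prod>k<N. f k) \<longlonglongrightarrow> lim (\<lambda>N. \<Prod>k<N. f k)"
    and "\<And>N. lim (\<lambda>N. \<Prod>k<N. f k) \<le> (\<Prod>k<N. f k)"
proof -
  have dec: "decseq (\<lambda>N. \<Prod>k<N. f k)"
  proof (rule decseq_SucI)
    fix N
    have "(\<Prod>k<N. f k) * f N \<le> (\<Prod>k<N. f k) * 1"
      using assms by (intro mult_left_mono prod_nonneg) auto
    then show "(\<Prod>k<Suc N. f k) \<le> (\<Prod>k<N. f k)" by simp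
  qed
  obtain L where L: "(\<lambda>N. \<Prod>k<N. f k) \<longlonglongrightarrow> L" "\<forall>i. L \<le> (\<Prod>k<i. f k)"
    using decseq_convergent[OF dec, of 0] assms by (auto intro: prod_nonneg)
  have "lim (\<lambda>N. \<Prod>k<N. f k) = L" using L(1) by (rule limI)
  then show "(\<lambda>N. \<Prod>k<N. f k) \<longlonglongrightarrow> lim (\<lambda>N. \<Prod>k<N. f k)"
    and "\<And>N. lim (\<lambda>N. \<Prod>k<N. f k) \<le> (\<Prod>k<N. f k)" using L by auto
qed

lemma factor_bounds:
  fixes a :: "nat \<Rightarrow> real" and s :: real
  assumes eig: "\<And>k. 0 < a k \<and> a k < 2" and s: "0 \<le> s" "s \<le> 1"
  shows "0 \<le> 1 - s^2 * (1 - a k)^2 \<and> 1 - s^2 * (1 - a k)^2 \<le> 1"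
proof -
  have "\<bar>1 - a k\<bar> < 1" using eig[of k] by auto
  then have "(1 - a k)^2 \<le> 1" by (simp add: abs_square_le_1)
  moreover have "s^2 \<le> 1" using s by (simp add: power_le_one)
  ultimately have "s^2 * (1 - a k)^2 \<le> 1" by (simp add: mult_le_one)
  then show ?thesis by simp
qed

lemma series_lim:
  assumes gauss: "is_gauss_kernel a F" and eig: "\<And>k. 0 < a k \<and> a k < 2"
    and s: "0 < s" "s \<le> 1"
    and pos: "lim (\<lambda>N. \<Prod>k<N. 1 - s^2 * (1 - a k)^2) > 0"
  shows "sq_integrable_kernels F"
    and "(\<lambda>n. fact n * kernel_norm2 F n * s^n) sums (lim (\<lambda>N. \<Prod>k<N. 1 - s^2 * (1 - a k)^2)) powr (-1/2)"
proof -
  define P where "P N = (\<Prod>k<N. 1 - s^2 * (1 - a k)^2)" for N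
  define L where "L = lim P"
  have fb: "\<And>k. 0 \<le> 1 - s^2 * (1 - a k)^2 \<and> 1 - s^2 * (1 - a k)^2 \<le> 1"
  proof -
    fix k show "0 \<le> 1 - s^2 * (1 - a k)^2 \<and> 1 - s^2 * (1 - a k)^2 \<le> 1"
      by (rule factor_bounds[OF eig]) (use s in auto)
  qed
  have PL: "P \<longlonglongrightarrow> L" and LP: "\<And>N. L \<le> P N"
    using prod_conv[OF fb] unfolding P_def L_def by auto
  have L0: "L > 0" using pos unfolding L_def P_def .
  have G: "(\<lambda>n. bb F N n * s^n) sums (P N powr (-1/2))" for N
    unfolding P_def by (rule GF[OF gauss eig]) (use s in auto)
  have bnd: "TT F N n \<le> L powr (-1/2) / s^n" for N n
  proof -
    have "bb F N n * s^n \<le> P N powr (-1/2)"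
      using sum_le_suminf[OF sums_summable[OF G[of N]], of "{n}"] sums_unique[OF G[of N]] bb_nonneg s
      by simp
    also have "\<dots> \<le> L powr (-1/2)" by (rule powr_mono2') (use L0 LP in auto)
    finally have "bb F N n \<le> L powr (-1/2) / s^n" using s by (simp add: field_simps)
    moreover have "TT F N n \<le> bb F N n"
      unfolding bb_def using TT_nonneg[of F N n] by (simp add: mult_le_cancel_right1)
    ultimately show ?thesis by linarith
  qed
  have KN1: "(\<lambda>ks. (cmod (F n ks))^2) summable_on {ks. length ks = n}" for n
    by (rule KN(1)[OF bnd])
  have KN2: "(\<lambda>N. TT F N n) \<longlonglongrightarrow> kernel_norm2 F n" for n
    by (rule KN(2)[OF bnd])
  show "sq_integrable_kernels F" unfolding sq_integrable_kernels_def using KN1 by blast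
  show "(\<lambda>n. fact n * kernel_norm2 F n * s^n) sums (lim (\<lambda>N. \<Prod>k<N. 1 - s^2 * (1 - a k)^2)) powr (-1/2)"
    unfolding P_def[symmetric] L_def[symmetric]
  proof (rule MCT_series[where u="\<lambda>N n. bb F N n * s^n" and S="\<lambda>N. P N powr (-1/2)"])
    show "\<And>N n. 0 \<le> bb F N n * s^n" using bb_nonneg s by simp
    show "\<And>N n. bb F N n * s^n \<le> bb F (Suc N) n * s^n"
      using bb_incseq s by (auto simp: incseq_Suc_iff intro: mult_right_mono)
    show "\<And>n. (\<lambda>N. bb F N n * s^n) \<longlonglongrightarrow> fact n * kernel_norm2 F n * s^n"
      unfolding bb_def by (intro tendsto_intros KN2)
    show "\<And>N. (\<lambda>n. bb F N n * s^n) sums P N powr (-1/2)" by (rule G)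
    show "(\<lambda>N. P N powr (-1/2)) \<longlonglongrightarrow> L powr (-1/2)"
      by (rule tendsto_powr[OF PL tendsto_const]) (use L0 in auto)
  qed
qed

lemma part_i:
  assumes gauss: "is_gauss_kernel a F" and eig: "\<And>k. 0 < a k \<and> a k < 2"
    and pos: "0 < det_2A_A2 a"
  shows "in_L2 F"
proof -
  have e: "(\<lambda>N. \<Prod>k<N. 1 - 1^2 * (1 - a k)^2) = (\<lambda>N. \<Prod>k<N. 2 * a k - (a k)^2)"
    by (simp add: power2_eq_square algebra_simps)
  have pos': "lim (\<lambda>N. \<Prod>k<N. 1 - 1^2 * (1 - a k)^2) > 0" using pos unfolding e det_2A_A2_def .
  note R = series_lim[OF gauss eig _ _ pos']
  show ?thesis unfolding in_L2_def using R sums_summable by auto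
qed

definition Hm :: "(nat \<Rightarrow> real) \<Rightarrow> nat \<Rightarrow> real \<Rightarrow> real" where
  "Hm c m x = (\<Sum>p. (diffs ^^ m) c p * x^p)"

lemma diffs_pow_summable:
  fixes c :: "nat \<Rightarrow> real" and x :: real
  assumes "\<And>x. \<bar>x\<bar> < 1 \<Longrightarrow> summable (\<lambda>p. c p * x^p)"
  shows "\<bar>x\<bar> < 1 \<Longrightarrow> summable (\<lambda>p. (diffs ^^ m) c p * x^p)"
proof (induction m arbitrary: x)
  case 0 then show ?case using assms by simp
next
  case (Suc m)
  have sm': "\<And>y::real. norm y < 1 \<Longrightarrow> summable (\<lambda>p. (diffs ^^ m) c p * y^p)" using Suc.IH by simp
  have "summable (\<lambda>p. diffs ((diffs ^^ m) c) p * x^p)"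
    using termdiff_converges[of x 1 "(diffs ^^ m) c", OF _ sm'] Suc.prems by simp
  then show ?case by simp
qed

lemma Hm_deriv:
  assumes sm: "\<And>x. \<bar>x\<bar> < 1 \<Longrightarrow> summable (\<lambda>p. c p * x^p)" and x: "\<bar>x\<bar> < 1"
  shows "(Hm c m has_real_derivative Hm c (Suc m) x) (at x)"
proof -
  define K where "K = (1 + \<bar>x\<bar>) / 2"
  have K: "\<bar>K\<bar> < 1" "\<bar>x\<bar> < \<bar>K\<bar>" using x unfolding K_def by auto
  have "summable (\<lambda>p. (diffs ^^ m) c p * K^p)" by (rule diffs_pow_summable[OF sm K(1)])
  from termdiffs_strong[OF this, of x] K(2)
  have "DERIV (\<lambda>x. \<Sum>n. (diffs ^^ m) c n * x^n) x :> (\<Sum>n. diffs ((diffs ^^ m) c) n * x^n)" by simp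
  then show ?thesis unfolding Hm_def by simp
qed

lemma Hm_iter:
  assumes sm: "\<And>x. \<bar>x\<bar> < 1 \<Longrightarrow> summable (\<lambda>p. c p * x^p)"
  shows "iter_deriv_on m (Hm c k) {0<..<1} (Hm c (k + m))"
proof (induction m arbitrary: k)
  case 0 then show ?case by simp
next
  case (Suc m)
  have "\<forall>x\<in>{0<..<1}. (Hm c k has_real_derivative Hm c (Suc k) x) (at x)"
    using Hm_deriv[OF sm] by auto
  moreover have "iter_deriv_on m (Hm c (Suc k)) {0<..<1} (Hm c (k + Suc m))"
    using Suc.IH[of "Suc k"] by simp
  ultimately show ?case by auto
qed

lemma iter_deriv_unique:
  assumes "open S"
  shows "iter_deriv_on m g1 S h1 \<Longrightarrow> iter_deriv_on m g2 S h2 \<Longrightarrow> (\<forall>x\<in>S. g1 x = g2 x) \<Longrightarrow> x \<in> S \<Longrightarrow> h1 x = h2 x"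
proof (induction m arbitrary: g1 g2)
  case 0 then show ?case by simp
next
  case (Suc m)
  obtain g1' where g1': "\<forall>x\<in>S. (g1 has_real_derivative g1' x) (at x)" "iter_deriv_on m g1' S h1"
    using Suc.prems(1) by auto
  obtain g2' where g2': "\<forall>x\<in>S. (g2 has_real_derivative g2' x) (at x)" "iter_deriv_on m g2' S h2"
    using Suc.prems(2) by auto
  have "\<forall>x\<in>S. g1' x = g2' x"
  proof
    fix y assume y: "y \<in> S"
    have "(g1 has_real_derivative g2' y) (at y)"
      by (rule has_field_derivative_transform_within_open[OF _ assms y]) (use g2' y Suc.prems(3) in auto)
    then show "g1' y = g2' y" using g1' y DERIV_unique by blast
  qed
  then show ?case by (rule Suc.IH[OF g1'(2) g2'(2) _ Suc.prems(4)])
qed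

lemma diffs_pow_closed: "(diffs ^^ m) c p = pochhammer (of_nat (Suc p)) m * c (p + m)"
proof (induction m arbitrary: p)
  case 0 then show ?case by simp
next
  case (Suc m)
  have "(diffs ^^ Suc m) c p = of_nat (Suc p) * (diffs ^^ m) c (Suc p)" by (simp add: diffs_def)
  also have "\<dots> = of_nat (Suc p) * (pochhammer (of_nat (Suc (Suc p))) m * c (Suc p + m))" using Suc.IH by simp
  also have "\<dots> = pochhammer (of_nat (Suc p)) (Suc m) * c (p + Suc m)"
    by (simp add: pochhammer_rec add_ac mult_ac)
  finally show ?case .
qed

lemma pochhammer_ge_pow: "(x::real) \<ge> 0 \<Longrightarrow> x^m \<le> pochhammer x m"
proof -
  assume x: "x \<ge> 0"
  have "x^m = (\<Prod>i\<in>{0..<m}. x)" by simp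
  also have "\<dots> \<le> (\<Prod>i\<in>{0..<m}. x + of_nat i)" by (rule prod_mono) (use x in auto)
  finally show ?thesis by (simp add: pochhammer_prod)
qed

lemma summable_strict_mono_reindex:
  fixes d :: "nat \<Rightarrow> real"
  assumes sd: "summable d" and nn: "\<And>p. d p \<ge> 0" and g: "strict_mono g"
  shows "summable (\<lambda>n. d (g n))"
proof (rule bounded_imp_summable)
  show "\<And>n. 0 \<le> d (g n)" using nn by simp
  fix n
  have "(\<Sum>k\<le>n. d (g k)) = (\<Sum>p\<in>g ` {..n}. d p)"
    using strict_mono_imp_inj_on[OF g] by (simp add: sum.reindex inj_on_subset)
  also have "\<dots> \<le> suminf d" by (rule sum_le_suminf[OF sd]) (use nn in auto)
  finally show "(\<Sum>k\<le>n. d (g k)) \<le> suminf d" .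
qed

lemma left_lim_1:
  fixes f :: "real \<Rightarrow> real"
  assumes "continuous_on {0..1} f" and "\<And>x. x \<in> {0<..<1} \<Longrightarrow> f x \<le> B"
  shows "f 1 \<le> B"
proof (rule tendsto_upperbound)
  show "(f \<longlongrightarrow> f 1) (at_left 1)"
    by (rule continuous_on_Icc_at_leftD[OF assms(1)]) simp
  show "eventually (\<lambda>x. B \<ge> f x) (at_left 1)"
    using eventually_at_left_real[of 0 "1::real"] assms(2) by (auto elim: eventually_mono)
qed simp

lemma beta_scaled:
  fixes y b :: real and p :: nat
  assumes y: "0 < y" and b: "0 < b"
  shows "((\<lambda>t. t^p * (y - t) powr (b - 1)) has_integral (Beta (real p + 1) b * y powr (real p + b))) {0..y}"
proof -
  have B0: "((\<lambda>t. t powr (real p + 1 - 1) * (1 - t) powr (b - 1)) has_integral Beta (real p + 1) b) {0..1}"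
    by (rule has_integral_Beta_real) (use b in auto)
  have "((\<lambda>x. x powr (real p) * (1 - x) powr (b - 1)) has_integral Beta (real p + 1) b) {0..1}"
    using B0 by simp
  from has_integral_stretch_real[OF this, of "1/y"] y
  have S: "((\<lambda>x. (x/y) powr (real p) * (1 - x/y) powr (b - 1)) has_integral y * Beta (real p + 1) b) ((\<lambda>x. x * y) ` {0..1})"
    by simp
  have im: "(\<lambda>x. x * y) ` {0..1} = {0..y}" using y by (simp add: image_mult_atLeastAtMost_if')
  have S2: "((\<lambda>x. (x/y) powr (real p) * (1 - x/y) powr (b - 1) * y powr (real p + b - 1))
      has_integral (y * Beta (real p + 1) b * y powr (real p + b - 1))) {0..y}"
    using has_integral_mult_left[OF S[unfolded im]] .
  have val: "y * Beta (real p + 1) b * y powr (real p + b - 1) = Beta (real p + 1) b * y powr (real p + b)"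
  proof -
    have "y * y powr (real p + b - 1) = y powr (real p + b)"
      using y by (simp add: powr_add[symmetric] powr_diff)
    then show ?thesis by (simp add: mult_ac)
  qed
  show ?thesis
  proof (rule has_integral_spike_finite[where S="{0}", OF _ _ S2[unfolded val]])
    fix x assume x: "x \<in> {0..y} - {0}"
    then have x0: "0 < x" "x \<le> y" by auto
    have e1: "(x/y) powr (real p) = x^p / y powr (real p)"
      using x0 y by (simp add: powr_divide powr_realpow)
    have e2: "1 - x/y = (y - x) / y" using y by (simp add: field_simps)
    have e3: "((y - x) / y) powr (b - 1) = (y - x) powr (b - 1) / y powr (b - 1)"
      using x0 y by (simp add: powr_divide)
    have e4: "y powr (real p + b - 1) = y powr (real p) * y powr (b - 1)"
      using y by (simp add: powr_add[symmetric] add_diff_eq)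
    have pos: "y powr (real p) > 0" "y powr (b - 1) > 0" using y by auto
    show "x^p * (y - x) powr (b - 1) = (x/y) powr (real p) * (1 - x/y) powr (b - 1) * y powr (real p + b - 1)"
      by (subst e1, subst e2, subst e3, subst e4) (use pos in \<open>simp add: field_simps\<close>)
  qed simp
qed

lemma gamma_ratio:
  fixes p \<beta> :: real
  assumes p: "1 \<le> p" and \<beta>: "0 < \<beta>" "\<beta> < 1"
  shows "p powr \<beta> * Gamma (p + 1 - \<beta>) \<le> Gamma (p + 1)"
proof -
  have c: "(ln \<circ> Gamma) ((1 - \<beta>) *\<^sub>R (p + 1) + \<beta> *\<^sub>R p) \<le> (1 - \<beta>) * (ln \<circ> Gamma) (p + 1) + \<beta> * (ln \<circ> Gamma) p"
    by (rule convex_onD[OF log_convex_Gamma_real]) (use p \<beta> in auto)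
  have arg: "(1 - \<beta>) *\<^sub>R (p + 1) + \<beta> *\<^sub>R p = p + 1 - \<beta>" by (simp add: algebra_simps)
  have np: "p \<notin> \<int>\<^sub>\<le>\<^sub>0" using p by auto
  have G1: "Gamma (p + 1) = p * Gamma p" by (rule Gamma_plus1[OF np])
  have Gp: "Gamma p > 0" using p by simp
  have "ln (Gamma (p + 1)) = ln (p * Gamma p)" using G1 by simp
  also have "\<dots> = ln p + ln (Gamma p)" by (rule ln_mult_pos) (use Gp p in auto)
  finally have "ln (Gamma (p + 1)) = ln p + ln (Gamma p)" .
  then have "ln (Gamma (p + 1 - \<beta>)) \<le> ln (Gamma (p + 1)) - \<beta> * ln p"
    using c unfolding arg by (simp add: algebra_simps)
  then have "exp (ln (Gamma (p + 1 - \<beta>))) \<le> exp (ln (Gamma (p + 1)) - \<beta> * ln p)" by simp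
  moreover have "Gamma (p + 1 - \<beta>) > 0" "Gamma (p + 1) > 0" using p \<beta> by auto
  ultimately have "Gamma (p + 1 - \<beta>) \<le> Gamma (p + 1) / exp (\<beta> * ln p)"
    by (simp add: exp_diff)
  moreover have "exp (\<beta> * ln p) = p powr \<beta>" using p by (simp add: powr_def mult_ac)
  moreover have "p powr \<beta> > 0" using p by simp
  ultimately show ?thesis by (simp add: field_simps)
qed

lemma Beta_e:
  fixes b :: real and p :: nat
  assumes b: "0 < b"
  shows "Beta (real p + 1) b * (real p + b) = Gamma b * Gamma (real p + 1) / Gamma (real p + b)"
proof -
  have np: "real p + b \<notin> \<int>\<^sub>\<le>\<^sub>0" using b by auto
  have eq: "Gamma (real p + 1 + b) = (real p + b) * Gamma (real p + b)"
    using Gamma_plus1[OF np] by (simp add: add_ac)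
  have gen: "\<And>x c y::real. c \<noteq> 0 \<Longrightarrow> x / (c*y) * c = x / y" by simp
  have "Beta (real p + 1) b * (real p + b) = Gamma (real p + 1) * Gamma b / ((real p + b) * Gamma (real p + b)) * (real p + b)"
    unfolding Beta_def eq ..
  also have "\<dots> = Gamma (real p + 1) * Gamma b / Gamma (real p + b)"
    by (rule gen) (use b in simp)
  finally show ?thesis by (simp add: mult_ac)
qed

lemma J_series:
  fixes d :: "nat \<Rightarrow> real" and b y :: real
  assumes nn: "\<And>p. d p \<ge> 0" and sm: "\<And>x. \<bar>x\<bar> < 1 \<Longrightarrow> summable (\<lambda>p. d p * x^p)"
    and y: "0 < y" "y < 1" and b: "0 < b"
    and int: "(\<lambda>t. (\<Sum>p. d p * t^p) * (y - t) powr (b - 1)) integrable_on {0..y}"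
  shows "(\<lambda>p. d p * (Beta (real p + 1) b * y powr (real p + b))) sums
           integral {0..y} (\<lambda>t. (\<Sum>p. d p * t^p) * (y - t) powr (b - 1))"
proof -
  define g where "g t = (\<Sum>p. d p * t^p) * (y - t) powr (b - 1)" for t
  define f where "f k t = (\<Sum>p<k. d p * t^p) * (y - t) powr (b - 1)" for k t
  have fI: "(f k has_integral (\<Sum>p<k. d p * (Beta (real p + 1) b * y powr (real p + b)))) {0..y}" for k
  proof -
    have "((\<lambda>t. \<Sum>p<k. d p * (t^p * (y - t) powr (b - 1))) has_integral
           (\<Sum>p<k. d p * (Beta (real p + 1) b * y powr (real p + b)))) {0..y}"
      by (intro has_integral_sum has_integral_mult_right beta_scaled y b) auto
    moreover have "(\<lambda>t. \<Sum>p<k. d p * (t^p * (y - t) powr (b - 1))) = f k"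
      unfolding f_def by (rule ext) (simp add: sum_distrib_right mult.assoc)
    ultimately show ?thesis by simp
  qed
  have gI: "g integrable_on {0..y}" using int unfolding g_def .
  have tnn: "0 \<le> d p * t^p" if "t \<in> {0..y}" for t p using that nn by simp
  have tlt: "\<bar>t\<bar> < 1" if "t \<in> {0..y}" for t using that y by auto
  have fg: "f k t \<le> g t" if t: "t \<in> {0..y}" for k t
  proof -
    have "(\<Sum>p<k. d p * t^p) \<le> (\<Sum>p. d p * t^p)"
      by (rule sum_le_suminf[OF sm[OF tlt[OF t]]]) (use tnn[OF t] in auto)
    then show ?thesis unfolding f_def g_def by (intro mult_right_mono) auto
  qed
  have mc: "g integrable_on {0..y} \<and> ((\<lambda>k. integral {0..y} (f k)) \<longlongrightarrow> integral {0..y} g) sequentially"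
  proof (rule monotone_convergence_increasing)
    show "\<And>k. f k integrable_on {0..y}" using fI by blast
    show "\<And>k t. t \<in> {0..y} \<Longrightarrow> f k t \<le> f (Suc k) t"
      unfolding f_def using tnn by (intro mult_right_mono) auto
    show "\<And>t. t \<in> {0..y} \<Longrightarrow> (\<lambda>k. f k t) \<longlonglongrightarrow> g t"
      unfolding f_def g_def by (intro tendsto_mult_right summable_LIMSEQ sm tlt)
    have "\<bar>integral {0..y} (f k)\<bar> \<le> integral {0..y} g" for k
    proof -
      have "0 \<le> integral {0..y} (f k)"
        by (rule integral_nonneg) (use fI tnn nn in \<open>auto simp: f_def intro!: mult_nonneg_nonneg sum_nonneg\<close>)
      moreover have "integral {0..y} (f k) \<le> integral {0..y} g"
        by (rule integral_le) (use fI gI fg in auto)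
      ultimately show ?thesis by simp
    qed
    then show "bounded (range (\<lambda>k. integral {0..y} (f k)))"
      unfolding bounded_real by blast
  qed
  moreover have "(\<lambda>k. integral {0..y} (f k)) = (\<lambda>k. \<Sum>p<k. d p * (Beta (real p + 1) b * y powr (real p + b)))"
    by (rule ext) (rule integral_unique[OF fI])
  ultimately have "(\<lambda>k. \<Sum>p<k. d p * (Beta (real p + 1) b * y powr (real p + b))) \<longlonglongrightarrow> integral {0..y} g"
    by simp
  then show ?thesis unfolding sums_def g_def .
qed

definition beta_seq :: "(nat \<Rightarrow> nat list \<Rightarrow> complex) \<Rightarrow> nat \<Rightarrow> real" where
  "beta_seq F n = fact n * kernel_norm2 F n"
definition gam :: "(nat \<Rightarrow> nat list \<Rightarrow> complex) \<Rightarrow> nat \<Rightarrow> real" where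
  "gam F p = (if even p then beta_seq F (p div 2) else 0)"

lemma kn_nonneg: "kernel_norm2 F n \<ge> 0"
  unfolding kernel_norm2_def by (rule infsum_nonneg) auto

lemma beta_nonneg: "beta_seq F n \<ge> 0" unfolding beta_seq_def using kn_nonneg by simp
lemma gam_nonneg: "gam F p \<ge> 0" unfolding gam_def using beta_nonneg by simp

lemma common:
  assumes gauss: "is_gauss_kernel a F" and eig: "\<And>k. 0 < a k \<and> a k < 2"
    and hpos: "\<forall>l\<in>{0<..<1}. 0 < det_lam a l"
  shows "sq_integrable_kernels F"
    and "\<And>l. l \<in> {0<..<1} \<Longrightarrow> (\<lambda>p. gam F p * l^p) sums gfun a l"
proof -
  have R: "sq_integrable_kernels F \<and> (\<lambda>n. beta_seq F n * (l^2)^n) sums gfun a l" if l: "l \<in> {0<..<1}" for l :: real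
  proof -
    have e: "(\<lambda>N. \<Prod>k<N. 1 - (l^2)^2 * (1 - a k)^2) = (\<lambda>N. \<Prod>k<N. 1 - (l^2 * (1 - a k))^2)"
      by (simp add: power_mult_distrib)
    have pos: "lim (\<lambda>N. \<Prod>k<N. 1 - (l^2)^2 * (1 - a k)^2) > 0"
      using hpos l unfolding e det_lam_def by blast
    have s: "0 < l^2" "l^2 \<le> 1" using l by (auto simp: power_le_one)
    note S = series_lim[OF gauss eig s pos]
    have "lim (\<lambda>N. \<Prod>k<N. 1 - (l^2)^2 * (1 - a k)^2) powr (-1/2) = gfun a l"
      unfolding e gfun_def det_lam_def by simp
    then show ?thesis using S unfolding beta_seq_def by simp
  qed
  show "sq_integrable_kernels F" using R[of "1/2"] by simp
  fix l :: real assume l: "l \<in> {0<..<1}"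
  have "(\<lambda>m. gam F (2*m) * l^(2*m)) sums gfun a l"
    using R[OF l] by (simp add: gam_def power_mult)
  moreover have "strict_mono (\<lambda>m::nat. 2*m)" by (rule strict_monoI) simp
  moreover have "gam F n * l^n = 0" if "n \<notin> range (\<lambda>m::nat. 2*m)" for n
    using that by (auto simp: gam_def elim!: evenE)
  ultimately show "(\<lambda>p. gam F p * l^p) sums gfun a l"
    using sums_mono_reindex[of "\<lambda>m::nat. 2*m" "\<lambda>p. gam F p * l^p"] by blast
qed

lemma gam_summable:
  assumes gs: "\<And>l. l \<in> {0<..<1} \<Longrightarrow> (\<lambda>p. gam F p * l^p) sums gfun a l"
    and x: "\<bar>x\<bar> < 1"
  shows "summable (\<lambda>p. gam F p * x^p)"
proof -
  define l where "l = (1 + \<bar>x\<bar>) / 2"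
  have l: "l \<in> {0<..<1}" "\<bar>x\<bar> \<le> l" using x unfolding l_def by auto
  show ?thesis
  proof (rule summable_comparison_test'[OF sums_summable[OF gs[OF l(1)]]])
    fix n
    have "\<bar>x\<bar>^n \<le> l^n" using l by (intro power_mono) auto
    then show "norm (gam F n * x^n) \<le> gam F n * l^n"
      using gam_nonneg[of F n] by (simp add: abs_mult power_abs mult_left_mono)
  qed
qed

lemma h_eq:
  assumes gs: "\<And>l. l \<in> {0<..<1} \<Longrightarrow> (\<lambda>p. gam F p * l^p) sums gfun a l"
    and h: "iter_deriv_on m (gfun a) {0<..<1} h" and x: "x \<in> {0<..<1}"
  shows "h x = Hm (gam F) m x"
proof -
  have sm: "\<And>x. \<bar>x\<bar> < 1 \<Longrightarrow> summable (\<lambda>p. gam F p * x^p)" by (rule gam_summable[OF gs])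
  have it: "iter_deriv_on m (Hm (gam F) 0) {0<..<1} (Hm (gam F) m)"
    using Hm_iter[OF sm, of m 0] by simp
  have eq: "\<forall>y\<in>{0<..<1}. gfun a y = Hm (gam F) 0 y"
  proof
    fix y :: real assume y: "y \<in> {0<..<1}"
    show "gfun a y = Hm (gam F) 0 y" unfolding Hm_def using sums_unique[OF gs[OF y]] by simp
  qed
  show ?thesis by (rule iter_deriv_unique[OF _ h it eq x]) simp
qed

lemma d_closed:
  assumes "m \<le> n"
  shows "(diffs ^^ m) (gam F) (2*n - m) = pochhammer (real (Suc (2*n - m))) m * beta_seq F n"
proof -
  have "2*n - m + m = 2*n" using assms by simp
  then show ?thesis unfolding diffs_pow_closed by (simp add: gam_def)
qed

lemma d_lower:
  assumes "m \<le> n"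
  shows "real n ^ m * beta_seq F n \<le> (diffs ^^ m) (gam F) (2*n - m)"
proof -
  have "real n ^ m \<le> real (Suc (2*n - m)) ^ m" using assms by (intro power_mono) auto
  also have "\<dots> \<le> pochhammer (real (Suc (2*n - m))) m" by (rule pochhammer_ge_pow) simp
  finally show ?thesis unfolding d_closed[OF assms]
    by (intro mult_right_mono beta_nonneg)
qed

lemma d_nonneg: "(diffs ^^ m) (gam F) p \<ge> 0"
  unfolding diffs_pow_closed using gam_nonneg
  by (intro mult_nonneg_nonneg) (auto simp: pochhammer_prod intro!: prod_nonneg)

lemma summable_2n_minus:
  fixes Y :: "nat \<Rightarrow> real"
  assumes sY: "summable Y" and nn: "\<And>p. Y p \<ge> 0"
  shows "summable (\<lambda>n. Y (2*n - m))"
proof -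
  have "summable (\<lambda>n. Y (2*n + m))"
    by (rule summable_strict_mono_reindex[OF sY nn]) (rule strict_monoI, simp)
  moreover have "(\<lambda>n. Y (2*(n + m) - m)) = (\<lambda>n. Y (2*n + m))" by (rule ext) (simp add: add.commute)
  ultimately have "summable (\<lambda>n. Y (2*(n + m) - m))" by simp
  then show ?thesis by (subst summable_iff_shift[symmetric, of _ m])
qed

lemma final_cmp:
  fixes Y :: "nat \<Rightarrow> real"
  assumes sY: "summable Y" and nn: "\<And>p. Y p \<ge> 0"
    and le: "\<And>n. n \<ge> N \<Longrightarrow> (1 + real n powr \<alpha>) * fact n * kernel_norm2 F n \<le> Y (2*n - m)"
  shows "summable (\<lambda>n. (1 + real n powr \<alpha>) * fact n * kernel_norm2 F n)"
proof (rule summable_comparison_test'[OF summable_2n_minus[OF sY nn, of m]])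
  fix n assume n: "n \<ge> N"
  have "0 \<le> (1 + real n powr \<alpha>) * fact n * kernel_norm2 F n"
    using kn_nonneg[of F n] by (intro mult_nonneg_nonneg) auto
  then show "norm ((1 + real n powr \<alpha>) * fact n * kernel_norm2 F n) \<le> Y (2*n - m)"
    using le[OF n] by simp
qed

lemma case_int:
  assumes gs: "\<And>l. l \<in> {0<..<1} \<Longrightarrow> (\<lambda>p. gam F p * l^p) sums gfun a l"
    and \<alpha>: "\<alpha> = real m" "1 \<le> m"
    and hB: "\<forall>l\<in>{0<..<1}. \<exists>v. has_alpha_deriv \<alpha> (gfun a) l v \<and> v \<le> B"
  shows "summable (\<lambda>n. (1 + real n powr \<alpha>) * fact n * kernel_norm2 F n)"
proof -
  define d where "d = (diffs ^^ m) (gam F)"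
  have sm: "\<And>x. \<bar>x\<bar> < 1 \<Longrightarrow> summable (\<lambda>p. gam F p * x^p)" by (rule gam_summable[OF gs])
  have dsm: "\<And>x. \<bar>x\<bar> < 1 \<Longrightarrow> summable (\<lambda>p. d p * x^p)" unfolding d_def by (rule diffs_pow_summable[OF sm])
  have dnn: "\<And>p. d p \<ge> 0" unfolding d_def by (rule d_nonneg)
  have aN: "\<alpha> \<in> \<nat>" "nat \<lfloor>\<alpha>\<rfloor> = m" using \<alpha> by auto
  have HB: "Hm (gam F) m l \<le> B" if l: "l \<in> {0<..<1}" for l
  proof -
    obtain v where v: "has_alpha_deriv \<alpha> (gfun a) l v" "v \<le> B" using hB l by blast
    then obtain h where h: "iter_deriv_on m (gfun a) {0<..<1} h" "h l = v"
      unfolding has_alpha_deriv_def using aN by auto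
    show ?thesis using h_eq[OF gs h(1) l] h(2) v(2) by simp
  qed
  have part: "(\<Sum>p<P. d p) \<le> B" for P
  proof -
    have "(\<lambda>l. \<Sum>p<P. d p * l^p) 1 \<le> B"
    proof (rule left_lim_1)
      show "continuous_on {0..1} (\<lambda>l. \<Sum>p<P. d p * l^p)" by (intro continuous_intros)
      fix l :: real assume l: "l \<in> {0<..<1}"
      have "(\<Sum>p<P. d p * l^p) \<le> (\<Sum>p. d p * l^p)"
        by (rule sum_le_suminf[OF dsm]) (use l dnn in auto)
      also have "\<dots> = Hm (gam F) m l" unfolding Hm_def d_def ..
      finally show "(\<Sum>p<P. d p * l^p) \<le> B" using HB[OF l] by linarith
    qed
    then show ?thesis by simp
  qed
  have sd: "summable d"
    by (rule bounded_imp_summable[where B=B, OF dnn]) (metis part lessThan_Suc_atMost)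
  show ?thesis
  proof (rule final_cmp[where Y="\<lambda>p. 2 * d p" and N="Suc m" and m=m])
    show "summable (\<lambda>p. 2 * d p)" using sd by simp
    show "\<And>p. 0 \<le> 2 * d p" using dnn by simp
    fix n assume n: "Suc m \<le> n"
    have n1: "1 \<le> real n" using n by simp
    have pw: "real n powr \<alpha> = real n ^ m" using \<alpha> n by (simp add: powr_realpow)
    have "1 \<le> real n ^ m" using n1 by (simp add: one_le_power)
    then have "(1 + real n ^ m) \<le> 2 * real n ^ m" by linarith
    then have "(1 + real n ^ m) * (fact n * kernel_norm2 F n) \<le> (2 * real n ^ m) * (fact n * kernel_norm2 F n)"
      using kn_nonneg[of F n] by (intro mult_right_mono) auto
    then have "(1 + real n powr \<alpha>) * fact n * kernel_norm2 F n \<le> (2 * real n ^ m) * beta_seq F n"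
      unfolding pw beta_seq_def by (simp add: mult.assoc)
    also have "\<dots> \<le> 2 * d (2*n - m)" using d_lower[of m n F] n unfolding d_def by simp
    finally show "(1 + real n powr \<alpha>) * fact n * kernel_norm2 F n \<le> 2 * d (2*n - m)" .
  qed
qed

lemma left_lim_half:
  fixes f :: "real \<Rightarrow> real"
  assumes "continuous_on {1/2..1} f" and "\<And>x. x \<in> {0<..<1} \<Longrightarrow> f x \<le> B"
  shows "f 1 \<le> B"
proof (rule tendsto_upperbound)
  show "(f \<longlongrightarrow> f 1) (at_left 1)"
    by (rule continuous_on_Icc_at_leftD[OF assms(1)]) simp
  show "eventually (\<lambda>x. B \<ge> f x) (at_left 1)"
    using eventually_at_left_real[of 0 "1::real"] assms(2) by (auto elim: eventually_mono)
qed simp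

lemma case_frac:
  assumes gs: "\<And>l. l \<in> {0<..<1} \<Longrightarrow> (\<lambda>p. gam F p * l^p) sums gfun a l"
    and \<beta>: "0 < \<beta>0" "\<beta>0 < 1" and \<alpha>: "\<alpha> = real m + \<beta>0"
    and nN: "\<alpha> \<notin> \<nat>" "nat \<lfloor>\<alpha>\<rfloor> = m" "\<alpha> - of_int \<lfloor>\<alpha>\<rfloor> = \<beta>0"
    and hB: "\<forall>l\<in>{0<..<1}. \<exists>v. has_alpha_deriv \<alpha> (gfun a) l v \<and> v \<le> B"
  shows "summable (\<lambda>n. (1 + real n powr \<alpha>) * fact n * kernel_norm2 F n)"
proof -
  define S :: "real set" where "S = {0<..<1}"
  define b where "b = 1 - \<beta>0"
  have b: "0 < b" "b < 1" "b - 1 = - \<beta>0" "1 - \<beta>0 = b" using \<beta> unfolding b_def by auto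
  define d where "d = (diffs ^^ m) (gam F)"
  define Bt where "Bt p = Beta (real p + 1) b" for p :: nat
  define J where "J y = integral {0..y} (\<lambda>t. (\<Sum>p. d p * t^p) * (y - t) powr (b - 1))" for y
  have sm: "\<And>x. \<bar>x\<bar> < 1 \<Longrightarrow> summable (\<lambda>p. gam F p * x^p)" by (rule gam_summable[OF gs])
  have dsm: "\<And>x. \<bar>x\<bar> < 1 \<Longrightarrow> summable (\<lambda>p. d p * x^p)" unfolding d_def by (rule diffs_pow_summable[OF sm])
  have dnn: "\<And>p. d p \<ge> 0" unfolding d_def by (rule d_nonneg)
  have Btpos: "Bt p > 0" for p unfolding Bt_def Beta_def using b by (intro divide_pos_pos mult_pos_pos Gamma_real_pos) auto
  have Gb: "Gamma b > 0" using b by simp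
  have Hd: "Hm (gam F) m t = (\<Sum>p. d p * t^p)" for t unfolding Hm_def d_def ..
  have unpack: "\<exists>v I. v \<le> B \<and> (\<forall>y\<in>S. (\<lambda>t. (\<Sum>p. d p * t^p) * (y - t) powr (b - 1)) integrable_on {0..y} \<and> I y = J y)
      \<and> (I has_real_derivative (Gamma b * v)) (at x)" if x: "x \<in> S" for x
  proof -
    obtain v where v: "has_alpha_deriv \<alpha> (gfun a) x v" "v \<le> B" using hB x unfolding S_def by blast
    then obtain h where h: "iter_deriv_on m (gfun a) {0<..<1} h" "has_RL_deriv \<beta>0 h x v"
      unfolding has_alpha_deriv_def using nN by auto
    obtain I where I: "\<forall>y\<in>{0<..<1}. (\<lambda>t. h t * (y - t) powr (-\<beta>0)) absolutely_integrable_on {0..y} \<and>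
                         I y = integral {0..y} (\<lambda>t. h t * (y - t) powr (-\<beta>0))"
        "(I has_real_derivative (Gamma (1 - \<beta>0) * v)) (at x)"
      using h(2) unfolding has_RL_deriv_def by blast
    have "(\<lambda>t. (\<Sum>p. d p * t^p) * (y - t) powr (b - 1)) integrable_on {0..y} \<and> I y = J y" if y: "y \<in> S" for y
    proof -
      have ai: "(\<lambda>t. h t * (y - t) powr (-\<beta>0)) absolutely_integrable_on {0..y}" and Iy: "I y = integral {0..y} (\<lambda>t. h t * (y - t) powr (-\<beta>0))"
        using I(1) y unfolding S_def by auto
      have "(\<lambda>t. h t * (y - t) powr (-\<beta>0)) integrable_on {0..y}"
        using ai unfolding absolutely_integrable_on_def by blast
      then have hi: "((\<lambda>t. h t * (y - t) powr (-\<beta>0)) has_integral I y) {0..y}" unfolding Iy by blast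
      have "((\<lambda>t. (\<Sum>p. d p * t^p) * (y - t) powr (b - 1)) has_integral I y) {0..y}"
      proof (rule has_integral_spike_finite[where S="{0}", OF _ _ hi])
        fix t assume t: "t \<in> {0..y} - {0}"
        then have "t \<in> {0<..<1}" using y unfolding S_def by auto
        then have "h t = Hm (gam F) m t" using h_eq[OF gs h(1)] by blast
        then show "(\<Sum>p. d p * t^p) * (y - t) powr (b - 1) = h t * (y - t) powr (-\<beta>0)"
          using b(3) Hd by simp
      qed simp
      then show ?thesis unfolding J_def by (auto simp: integral_unique)
    qed
    then show ?thesis using I(2) v(2) b(4) by auto
  qed
  have IJ: "\<And>y. y \<in> S \<Longrightarrow> (\<lambda>t. (\<Sum>p. d p * t^p) * (y - t) powr (b - 1)) integrable_on {0..y}"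
    using unpack[of "1/2"] unfolding S_def by auto
  have Jser: "(\<lambda>p. d p * (Bt p * y powr (real p + b))) sums J y" if y: "y \<in> S" for y
    unfolding Bt_def J_def by (rule J_series[OF dnn dsm _ _ b(1) IJ[OF y]]) (use y in \<open>auto simp: S_def\<close>)
  define Q where "Q P y = (\<Sum>p<P. d p * (Bt p * y powr (real p + b)))" for P y
  define DQ where "DQ P y = (\<Sum>p<P. d p * (Bt p * ((real p + b) * y powr (real p + b - 1))))" for P y
  have mono: "Q P y2 - Q P y1 \<le> J y2 - J y1" if y: "y1 \<in> S" "y2 \<in> S" "y1 \<le> y2" for P y1 y2
  proof -
    have s: "(\<lambda>p. d p * (Bt p * y2 powr (real p + b)) - d p * (Bt p * y1 powr (real p + b))) sums (J y2 - J y1)"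
      by (rule sums_diff[OF Jser Jser]) (use y in auto)
    have tnn: "0 \<le> d p * (Bt p * y2 powr (real p + b)) - d p * (Bt p * y1 powr (real p + b))" for p
    proof -
      have "y1 powr (real p + b) \<le> y2 powr (real p + b)" using y b unfolding S_def by (intro powr_mono2) auto
      then have "Bt p * y1 powr (real p + b) \<le> Bt p * y2 powr (real p + b)" using Btpos[of p] by simp
      then have "0 \<le> Bt p * y2 powr (real p + b) - Bt p * y1 powr (real p + b)" by simp
      then have "0 \<le> d p * (Bt p * y2 powr (real p + b) - Bt p * y1 powr (real p + b))"
        using dnn[of p] by simp
      then show ?thesis by (simp only: right_diff_distrib mult.assoc)
    qed
    have "(\<Sum>p<P. d p * (Bt p * y2 powr (real p + b)) - d p * (Bt p * y1 powr (real p + b))) \<le> J y2 - J y1"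
      using sum_le_suminf[OF sums_summable[OF s], of "{..<P}"] tnn sums_unique[OF s] by simp
    then show ?thesis unfolding Q_def by (simp add: sum_subtractf)
  qed
  have Qder: "(Q P has_real_derivative DQ P y) (at y)" if y: "0 < y" for P y
    unfolding Q_def DQ_def
    by (intro DERIV_sum DERIV_cmult has_real_derivative_powr y)
  have DQle: "DQ P x \<le> Gamma b * B" if x: "x \<in> S" for P x
  proof -
    obtain v I where vI: "v \<le> B" "\<forall>y\<in>S. I y = J y" "(I has_real_derivative (Gamma b * v)) (at x)"
      using unpack[OF x] by blast
    have Jd: "(J has_real_derivative (Gamma b * v)) (at x)"
      by (rule has_field_derivative_transform_within_open[OF vI(3) _ x]) (use vI(2) in \<open>auto simp: S_def\<close>)
    have x0: "0 < x" "x < 1" using x unfolding S_def by auto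
    have "DQ P x \<le> Gamma b * v"
    proof (rule ccontr)
      assume "\<not> DQ P x \<le> Gamma b * v"
      then have neg: "Gamma b * v - DQ P x < 0" by simp
      have "((\<lambda>y. J y - Q P y) has_real_derivative (Gamma b * v - DQ P x)) (at x)"
        by (intro DERIV_diff Jd Qder x0(1))
      from DERIV_neg_dec_right[OF this neg] obtain \<delta> where \<delta>: "\<delta> > 0"
        "\<And>h. h > 0 \<Longrightarrow> h < \<delta> \<Longrightarrow> J x - Q P x > J (x + h) - Q P (x + h)" by blast
      define h where "h = min \<delta> (1 - x) / 2"
      have h: "h > 0" "h < \<delta>" "x + h \<in> S" using \<delta>(1) x0 unfolding h_def S_def by (auto simp: min_def field_simps)
      have "Q P (x + h) - Q P x \<le> J (x + h) - J x" by (rule mono[OF x h(3)]) (use h in auto)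
      moreover have "J x - Q P x > J (x + h) - Q P (x + h)" by (rule \<delta>(2)[OF h(1,2)])
      ultimately show False by linarith
    qed
    also have "\<dots> \<le> Gamma b * B" using vI(1) Gb by simp
    finally show ?thesis .
  qed
  have part: "(\<Sum>p<P. d p * (Bt p * (real p + b))) \<le> Gamma b * B" for P
  proof -
    have "DQ P 1 \<le> Gamma b * B"
    proof (rule left_lim_half)
      show "continuous_on {1/2..1} (DQ P)" unfolding DQ_def by (intro continuous_intros) auto
      show "\<And>x. x \<in> {0<..<1} \<Longrightarrow> DQ P x \<le> Gamma b * B" using DQle unfolding S_def by blast
    qed
    then show ?thesis unfolding DQ_def by simp
  qed
  have Ynn: "0 \<le> d p * (Bt p * (real p + b))" for p using dnn[of p] Btpos[of p] b by simp
  have sY: "summable (\<lambda>p. d p * (Bt p * (real p + b)))"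
    by (rule bounded_imp_summable[where B="Gamma b * B", OF Ynn]) (metis part lessThan_Suc_atMost)
  show ?thesis
  proof (rule final_cmp[where Y="\<lambda>p. (2 / Gamma b) * (d p * (Bt p * (real p + b)))" and N="Suc m" and m=m])
    show "summable (\<lambda>p. (2 / Gamma b) * (d p * (Bt p * (real p + b))))" using sY by (rule summable_mult)
    show "\<And>p. 0 \<le> (2 / Gamma b) * (d p * (Bt p * (real p + b)))" using Ynn Gb by simp
    fix n assume n: "Suc m \<le> n"
    define p where "p = 2*n - m"
    have pn: "real n + 1 \<le> real p" using n unfolding p_def by simp
    have n1: "1 \<le> real n" using n by simp
    have pw: "real n powr \<alpha> = real n ^ m * real n powr \<beta>0"
      using n1 unfolding \<alpha> by (simp add: powr_add powr_realpow)
    have "1 \<le> real n powr \<alpha>" using n1 \<alpha> \<beta> by (intro ge_one_powr_ge_zero) auto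
    then have "(1 + real n powr \<alpha>) * (fact n * kernel_norm2 F n) \<le> (2 * real n powr \<alpha>) * (fact n * kernel_norm2 F n)"
      using kn_nonneg[of F n] by (intro mult_right_mono) auto
    then have st1: "(1 + real n powr \<alpha>) * fact n * kernel_norm2 F n \<le> 2 * (real n ^ m * beta_seq F n) * real n powr \<beta>0"
      unfolding pw beta_seq_def by (simp add: mult_ac)
    have dl: "real n ^ m * beta_seq F n \<le> d p" unfolding d_def p_def by (rule d_lower) (use n in simp)
    have pp: "real n powr \<beta>0 \<le> real p powr \<beta>0" using pn \<beta> by (intro powr_mono2) auto
    have st2: "2 * (real n ^ m * beta_seq F n) * real n powr \<beta>0 \<le> 2 * d p * real p powr \<beta>0"
      using dl pp dnn[of p] beta_nonneg[of F n]
      by (intro mult_mono mult_left_mono) auto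
    have gr: "real p powr \<beta>0 * Gamma (real p + 1 - \<beta>0) \<le> Gamma (real p + 1)"
      by (rule gamma_ratio) (use pn \<beta> in auto)
    have Gp: "Gamma (real p + b) > 0" using b by (intro Gamma_real_pos) simp
    have e: "real p + 1 - \<beta>0 = real p + b" unfolding b_def by simp
    have "real p powr \<beta>0 \<le> Gamma (real p + 1) / Gamma (real p + b)"
      using gr Gp unfolding e by (simp add: pos_le_divide_eq)
    also have "\<dots> = Bt p * (real p + b) / Gamma b"
      unfolding Bt_def Beta_e[OF b(1)] using Gb by simp
    finally have "real p powr \<beta>0 \<le> Bt p * (real p + b) / Gamma b" .
    then have st3: "2 * d p * real p powr \<beta>0 \<le> 2 * d p * (Bt p * (real p + b) / Gamma b)"
      using dnn[of p] by (intro mult_left_mono) auto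
    show "(1 + real n powr \<alpha>) * fact n * kernel_norm2 F n \<le> (2 / Gamma b) * (d (2*n - m) * (Bt (2*n - m) * (real (2*n - m) + b)))"
      using st1 st2 st3 unfolding p_def by (simp add: field_simps)
  qed
qed

theorem theorem3p11:
  fixes a :: "nat \<Rightarrow> real" and F :: "nat \<Rightarrow> nat list \<Rightarrow> complex"
  assumes eig: "\<And>k. 0 < a k \<and> a k < 2"
    and gauss: "is_gauss_kernel a F"
  shows "(0 < det_2A_A2 a \<longrightarrow> in_L2 F) \<and>
         (\<forall>\<alpha>>0. ((\<forall>l\<in>{0<..<1}. 0 < det_lam a l) \<and>
                  (\<exists>B. \<forall>l\<in>{0<..<1}. \<exists>v. has_alpha_deriv \<alpha> (gfun a) l v \<and> v \<le> B))
               \<longrightarrow> in_D \<alpha> F)"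
proof (intro conjI)
  show "0 < det_2A_A2 a \<longrightarrow> in_L2 F" using part_i[OF gauss eig] by blast
  show "\<forall>\<alpha>>0. ((\<forall>l\<in>{0<..<1}. 0 < det_lam a l) \<and>
                  (\<exists>B. \<forall>l\<in>{0<..<1}. \<exists>v. has_alpha_deriv \<alpha> (gfun a) l v \<and> v \<le> B))
               \<longrightarrow> in_D \<alpha> F"
  proof (intro allI impI, elim conjE exE)
    fix \<alpha> :: real and B :: real
    assume \<alpha>: "\<alpha> > 0" and hpos: "\<forall>l\<in>{0<..<1}. 0 < det_lam a l"
      and hB: "\<forall>l\<in>{0<..<1}. \<exists>v. has_alpha_deriv \<alpha> (gfun a) l v \<and> v \<le> B"
    note C = common[OF gauss eig hpos]
    have summ: "summable (\<lambda>n. (1 + real n powr \<alpha>) * fact n * kernel_norm2 F n)"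
    proof (cases "\<alpha> \<in> \<nat>")
      case True
      then obtain m where m: "\<alpha> = of_nat m" by (auto elim: Nats_cases)
      have m1: "1 \<le> m" using \<alpha> m by simp
      have m': "\<alpha> = real m" using m by simp
      show ?thesis by (rule case_int[OF C(2) m' m1 hB])
    next
      case False
      define m where "m = nat \<lfloor>\<alpha>\<rfloor>"
      define \<beta>0 where "\<beta>0 = \<alpha> - of_int \<lfloor>\<alpha>\<rfloor>"
      have fl: "0 \<le> \<lfloor>\<alpha>\<rfloor>" using \<alpha> by simp
      have rm: "real m = of_int \<lfloor>\<alpha>\<rfloor>" unfolding m_def using fl by simp
      have b0: "0 \<le> \<beta>0" "\<beta>0 < 1" unfolding \<beta>0_def by linarith+
      have b1: "\<beta>0 \<noteq> 0"
      proof
        assume "\<beta>0 = 0"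
        then have "\<alpha> = real m" using rm unfolding \<beta>0_def by simp
        then show False using False by simp
      qed
      have \<alpha>eq: "\<alpha> = real m + \<beta>0" using rm unfolding \<beta>0_def by simp
      have b2: "0 < \<beta>0" using b0(1) b1 by (metis order_le_less)
      show ?thesis
        by (rule case_frac[OF C(2) b2 b0(2) \<alpha>eq False m_def[symmetric] \<beta>0_def[symmetric] hB])
    qed
    show "in_D \<alpha> F" unfolding in_D_def using C(1) summ by simp
  qed
qed

end
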